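(* Let $\rho,\rho',\sigma,\sigma'$ be density operators on a Hilbert space $\mathcal H$ with $\dim\mathcal H=d$, with $\operatorname{supp}\rho\subset\operatorname{supp}\sigma$ and $\operatorname{supp}\rho'\subset\operatorname{supp}\sigma'$. Suppose $\|\rho-\rho'\|_1\le\epsilon$, $\|\sigma-\sigma'\|_1\le\epsilon$, and $\lambda_{\min}(\sigma)\ge\epsilon$, where $\lambda_{\min}(\sigma)$ is the minimum eigenvalue of $\sigma$. Then $$|D(\rho\|\sigma)-D(\rho'\|\sigma')|\le\epsilon\Big(\frac{\log(d-1)}{2}+d\log\frac{1}{\lambda_{\min}(\sigma)}+\frac{d^2}{\lambda_{\min}(\sigma)-\epsilon}\Big)+H_b\Big(\frac\epsilon2\Big).$$
   Context: $D$ is the quantum relative entropy, $\|X\|_1=\operatorname{tr}\sqrt{X^\dagger X}$, and $H_b(p)=-p\log p-(1-p)\log(1-p)$ is the binary entropy function (logarithms natural). *)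

theory Defs
  imports "Jordan_Normal_Form.Spectral_Radius" "Jordan_Normal_Form.Schur_Decomposition"
begin

text \<open>Operators on a d-dimensional Hilbert space are modelled as complex d x d matrices.\<close>

definition mtrace :: "complex mat \<Rightarrow> complex" where
  "mtrace A = (\<Sum>i<dim_row A. A $$ (i, i))"

definition hermitian_mat :: "complex mat \<Rightarrow> bool" where
  "hermitian_mat A \<longleftrightarrow> mat_adjoint A = A"

definition unitary_mat :: "nat \<Rightarrow> complex mat \<Rightarrow> bool" where
  "unitary_mat d U \<longleftrightarrow> U \<in> carrier_mat d d \<and> U * mat_adjoint U = 1\<^sub>m d \<and> mat_adjoint U * U = 1\<^sub>m d"

definition psd_mat :: "nat \<Rightarrow> complex mat \<Rightarrow> bool" where
  "psd_mat d A \<longleftrightarrow> A \<in> carrier_mat d d \<and> hermitian_mat A \<and>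
     (\<forall>v \<in> carrier_vec d. Re (conjugate v \<bullet> (A *\<^sub>v v)) \<ge> 0)"

definition density_op :: "nat \<Rightarrow> complex mat \<Rightarrow> bool" where
  "density_op d \<rho> \<longleftrightarrow> psd_mat d \<rho> \<and> mtrace \<rho> = 1"

definition supp_op :: "nat \<Rightarrow> complex mat \<Rightarrow> complex vec set" where
  "supp_op d A = (\<lambda>v. A *\<^sub>v v) ` carrier_vec d"

definition matfun :: "nat \<Rightarrow> (real \<Rightarrow> real) \<Rightarrow> complex mat \<Rightarrow> complex mat" where
  "matfun d f A = (SOME B. \<exists>U lam. unitary_mat d U \<and>
       A = U * mat_diag d (\<lambda>i. complex_of_real (lam i)) * mat_adjoint U \<and>
       B = U * mat_diag d (\<lambda>i. complex_of_real (f (lam i))) * mat_adjoint U)"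

definition trace_norm :: "nat \<Rightarrow> complex mat \<Rightarrow> real" where
  "trace_norm d X = Re (mtrace (matfun d sqrt (mat_adjoint X * X)))"

text \<open>Quantum relative entropy D(rho||sigma) = tr rho (log rho - log sigma), natural log;
  the logarithm is taken on the support (Isabelle's ln 0 = 0), which is the standard
  convention when supp rho is contained in supp sigma.\<close>
definition rel_entropy :: "nat \<Rightarrow> complex mat \<Rightarrow> complex mat \<Rightarrow> real" where
  "rel_entropy d \<rho> \<sigma> = Re (mtrace (\<rho> * (matfun d ln \<rho> - matfun d ln \<sigma>)))"

definition lambda_min :: "complex mat \<Rightarrow> real" where
  "lambda_min A = Min (Re ` spectrum A)"

definition bin_entropy :: "real \<Rightarrow> real" where
  "bin_entropy p = - p * ln p - (1 - p) * ln (1 - p)"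

end

theory Submission
  imports Defs
begin


lemma adj_dims[simp]: "dim_row (mat_adjoint A) = dim_col A" "dim_col (mat_adjoint A) = dim_row A"
  unfolding mat_adjoint_def by (auto simp: mat_of_rows_def)

lemma adj_index[simp]: "i < dim_col A \<Longrightarrow> j < dim_row A \<Longrightarrow>
   mat_adjoint (A::complex mat) $$ (i,j) = cnj (A $$ (j,i))"
  unfolding mat_adjoint_def by (simp add: mat_of_rows_def conjugate_complex_def)

lemma adj_carrier[simp]: "A \<in> carrier_mat n m \<Longrightarrow> mat_adjoint A \<in> carrier_mat m n"
  unfolding carrier_mat_def by simp

lemma adj_adj[simp]: "mat_adjoint (mat_adjoint (A::complex mat)) = A"
  by (rule eq_matI) simp_all
lemma mult_index: assumes A: "A \<in> carrier_mat n m" and B: "B \<in> carrier_mat m p" and i: "i < n" and j: "j < p"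
  shows "(A * B) $$ (i,j) = (\<Sum>k<m. A $$ (i,k) * B $$ (k,j))"
proof -
  have "(A * B) $$ (i,j) = row A i \<bullet> col B j" using A B i j by simp
  also have "\<dots> = (\<Sum>k\<in>{0..<m}. row A i $ k * col B j $ k)" unfolding scalar_prod_def using B by simp
  also have "\<dots> = (\<Sum>k<m. A $$ (i,k) * B $$ (k,j))" unfolding atLeast0LessThan
    by (rule sum.cong, insert A B i j, auto)
  finally show ?thesis .
qed
lemma adj_mult: assumes A: "(A::complex mat) \<in> carrier_mat n m" and B: "B \<in> carrier_mat m p"
  shows "mat_adjoint (A * B) = mat_adjoint B * mat_adjoint A"
proof (rule eq_matI)
  fix i j assume ij: "i < dim_row (mat_adjoint B * mat_adjoint A)" "j < dim_col (mat_adjoint B * mat_adjoint A)"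
  hence i: "i < p" and j: "j < n" using A B by auto
  have "mat_adjoint (A * B) $$ (i, j) = cnj ((A*B) $$ (j,i))" using i j A B by simp
  also have "\<dots> = cnj (\<Sum>k<m. A $$ (j,k) * B $$ (k,i))" using mult_index[OF A B j i] by simp
  also have "\<dots> = (\<Sum>k<m. mat_adjoint B $$ (i,k) * mat_adjoint A $$ (k,j))"
    unfolding cnj_sum by (rule sum.cong, insert A B i j, auto simp: mult.commute)
  also have "\<dots> = (mat_adjoint B * mat_adjoint A) $$ (i,j)"
    by (rule mult_index[symmetric], insert A B i j, auto)
  finally show "mat_adjoint (A * B) $$ (i, j) = (mat_adjoint B * mat_adjoint A) $$ (i, j)" .
next
  show "dim_row (mat_adjoint (A * B)) = dim_row (mat_adjoint B * mat_adjoint A)" using A B by simp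
  show "dim_col (mat_adjoint (A * B)) = dim_col (mat_adjoint B * mat_adjoint A)" using A B by simp
qed

lemma adj_minus: assumes A: "(A::complex mat) \<in> carrier_mat n m" and B: "B \<in> carrier_mat n m"
  shows "mat_adjoint (A - B) = mat_adjoint A - mat_adjoint B"
proof (rule eq_matI)
  fix i j assume "i < dim_row (mat_adjoint A - mat_adjoint B)" "j < dim_col (mat_adjoint A - mat_adjoint B)"
  thus "mat_adjoint (A - B) $$ (i, j) = (mat_adjoint A - mat_adjoint B) $$ (i, j)" using A B by simp
qed (insert A B, simp_all)

lemma adj_one[simp]: "mat_adjoint (1\<^sub>m n :: complex mat) = 1\<^sub>m n"
  by (rule eq_matI) simp_all

definition rdiag :: "nat \<Rightarrow> (nat \<Rightarrow> real) \<Rightarrow> complex mat" where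
  "rdiag n a = mat_diag n (\<lambda>i. complex_of_real (a i))"

lemma rdiag_carrier[simp]: "rdiag n a \<in> carrier_mat n n"
  by (simp add: rdiag_def)
lemma rdiag_dims[simp]: "dim_row (rdiag n a) = n" "dim_col (rdiag n a) = n"
  by (simp_all add: rdiag_def mat_diag_def)
lemma rdiag_index[simp]: "i < n \<Longrightarrow> j < n \<Longrightarrow> rdiag n a $$ (i,j) = (if i = j then complex_of_real (a i) else 0)"
  by (simp add: rdiag_def mat_diag_def)

lemma adj_rdiag[simp]: "mat_adjoint (rdiag n a) = rdiag n a"
  by (rule eq_matI) simp_all

declare index_mult_mat(1)[simp del]

definition hm :: "nat \<Rightarrow> complex mat \<Rightarrow> (nat \<Rightarrow> real) \<Rightarrow> complex mat" where
  "hm n U a = U * rdiag n a * mat_adjoint U"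

lemma hm_carrier[simp]: "U \<in> carrier_mat n n \<Longrightarrow> hm n U a \<in> carrier_mat n n"
  unfolding hm_def by (metis adj_carrier mult_carrier_mat rdiag_carrier)

lemma hm_dims[simp]: "U \<in> carrier_mat n n \<Longrightarrow> dim_row (hm n U a) = n"
   "U \<in> carrier_mat n n \<Longrightarrow> dim_col (hm n U a) = n"
  using hm_carrier by (blast, blast)

lemma rdiag_mult_right: "A \<in> carrier_mat m n \<Longrightarrow> i < m \<Longrightarrow> j < n \<Longrightarrow> (A * rdiag n a) $$ (i,j) = A $$ (i,j) * a j"
  unfolding rdiag_def by (subst mat_diag_mult_right[of _ m n]) simp_all

lemma rdiag_mult_left: "A \<in> carrier_mat n m \<Longrightarrow> i < n \<Longrightarrow> j < m \<Longrightarrow> (rdiag n a * A) $$ (i,j) = a i * A $$ (i,j)"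
  unfolding rdiag_def by (subst mat_diag_mult_left[of _ n m]) simp_all

lemma hm_index: assumes U: "U \<in> carrier_mat n n" and i: "i < n" and j: "j < n"
  shows "hm n U a $$ (i,j) = (\<Sum>k<n. U $$ (i,k) * a k * cnj (U $$ (j,k)))"
proof -
  have "hm n U a $$ (i,j) = (\<Sum>k<n. (U * rdiag n a) $$ (i,k) * mat_adjoint U $$ (k,j))"
    unfolding hm_def by (rule mult_index[of _ n n _ n], insert U i j, simp_all)
  also have "\<dots> = (\<Sum>k<n. U $$ (i,k) * a k * cnj (U $$ (j,k)))"
    by (rule sum.cong[OF refl], subst rdiag_mult_right[OF U i], simp, insert U j, simp)
  finally show ?thesis .
qed

lemma hm_hermitian: assumes U: "U \<in> carrier_mat n n" shows "mat_adjoint (hm n U a) = hm n U a"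
proof (rule eq_matI)
  fix i j assume ij: "i < dim_row (hm n U a)" "j < dim_col (hm n U a)"
  hence i: "i < n" and j: "j < n" using U by auto
  show "mat_adjoint (hm n U a) $$ (i, j) = hm n U a $$ (i, j)"
    using i j U by (simp add: hm_index mult.commute mult.left_commute)
qed (insert U, simp_all)

lemma rdiag_mult: "rdiag n a * rdiag n b = rdiag n (\<lambda>i. a i * b i)"
  by (rule eq_matI, subst rdiag_mult_right[of _ n], simp_all)

lemma mtrace_alt: "A \<in> carrier_mat n n \<Longrightarrow> mtrace A = (\<Sum>i<n. A $$ (i,i))"
  unfolding mtrace_def by simp

lemma mtrace_mult_comm: assumes A: "A \<in> carrier_mat n m" and B: "B \<in> carrier_mat m n"
  shows "mtrace (A * B) = mtrace (B * A)"
proof -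
  have AB: "A * B \<in> carrier_mat n n" and BA: "B * A \<in> carrier_mat m m" using A B by auto
  have "mtrace (A * B) = (\<Sum>i<n. \<Sum>k<m. A $$ (i,k) * B $$ (k,i))"
    unfolding mtrace_alt[OF AB] by (rule sum.cong[OF refl], rule mult_index[OF A B], simp_all)
  also have "\<dots> = (\<Sum>k<m. \<Sum>i<n. B $$ (k,i) * A $$ (i,k))"
    by (subst sum.swap) (simp add: mult.commute)
  also have "\<dots> = mtrace (B * A)"
    unfolding mtrace_alt[OF BA] by (rule sum.cong[OF refl], rule mult_index[OF B A, symmetric], simp_all)
  finally show ?thesis .
qed

lemma mtrace_minus: assumes A: "A \<in> carrier_mat n n" and B: "B \<in> carrier_mat n n"
  shows "mtrace (A - B) = mtrace A - mtrace B"
proof -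
  have "A - B \<in> carrier_mat n n" using A B by (metis minus_carrier_mat)
  thus ?thesis unfolding mtrace_alt[OF A] mtrace_alt[OF B] mtrace_alt[OF \<open>A - B \<in> carrier_mat n n\<close>]
    using A B by (simp add: sum_subtractf)
qed

lemma unitary_carrier[simp]: "unitary_mat n U \<Longrightarrow> U \<in> carrier_mat n n"
  unfolding unitary_mat_def by simp

lemma unitary_rows: assumes U: "unitary_mat n U" and i: "i < n" and j: "j < n"
  shows "(\<Sum>k<n. U $$ (i,k) * cnj (U $$ (j,k))) = (if i = j then 1 else 0)"
proof -
  have C: "U \<in> carrier_mat n n" using U by simp
  have "(U * mat_adjoint U) $$ (i,j) = (\<Sum>k<n. U $$ (i,k) * mat_adjoint U $$ (k,j))"
    by (rule mult_index[OF C _ i j], insert C, simp)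
  also have "\<dots> = (\<Sum>k<n. U $$ (i,k) * cnj (U $$ (j,k)))"
    by (rule sum.cong[OF refl], insert C j, simp)
  finally show ?thesis using U i j unfolding unitary_mat_def by simp
qed

lemma unitary_cols: assumes U: "unitary_mat n U" and i: "i < n" and j: "j < n"
  shows "(\<Sum>k<n. cnj (U $$ (k,i)) * U $$ (k,j)) = (if i = j then 1 else 0)"
proof -
  have C: "U \<in> carrier_mat n n" using U by simp
  have "(mat_adjoint U * U) $$ (i,j) = (\<Sum>k<n. mat_adjoint U $$ (i,k) * U $$ (k,j))"
    by (rule mult_index[OF _ C i j], insert C, simp)
  also have "\<dots> = (\<Sum>k<n. cnj (U $$ (k,i)) * U $$ (k,j))"
    by (rule sum.cong[OF refl], insert C i, simp)
  finally show ?thesis using U i j unfolding unitary_mat_def by simp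
qed

lemma cmod_sq_eq: "complex_of_real ((cmod z)^2) = z * cnj z"
  by (rule complex_norm_square)

lemma unitary_row_norm: assumes U: "unitary_mat n U" and i: "i < n"
  shows "(\<Sum>k<n. (cmod (U $$ (i,k)))^2) = 1"
proof -
  have "complex_of_real (\<Sum>k<n. (cmod (U $$ (i,k)))^2) = (\<Sum>k<n. U $$ (i,k) * cnj (U $$ (i,k)))"
    by (simp only: of_real_sum cmod_sq_eq)
  also have "\<dots> = 1" using unitary_rows[OF U i i] by simp
  finally show ?thesis by (metis of_real_eq_1_iff)
qed

lemma unitary_col_norm: assumes U: "unitary_mat n U" and i: "i < n"
  shows "(\<Sum>k<n. (cmod (U $$ (k,i)))^2) = 1"
proof -
  have "complex_of_real (\<Sum>k<n. (cmod (U $$ (k,i)))^2) = (\<Sum>k<n. cnj (U $$ (k,i)) * U $$ (k,i))"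
    by (simp only: of_real_sum cmod_sq_eq mult.commute)
  also have "\<dots> = 1" using unitary_cols[OF U i i] by simp
  finally show ?thesis by (metis of_real_eq_1_iff)
qed

lemma unitary_entry_le1: assumes U: "unitary_mat n U" and i: "i < n" and j: "j < n"
  shows "cmod (U $$ (i,j)) \<le> 1"
proof -
  have "(cmod (U $$ (i,j)))^2 \<le> (\<Sum>k<n. (cmod (U $$ (i,k)))^2)"
    by (rule member_le_sum[where f = "\<lambda>k. (cmod (U $$ (i,k)))^2"], insert j, auto)
  hence "(cmod (U $$ (i,j)))^2 \<le> 1" using unitary_row_norm[OF U i] by simp
  thus ?thesis by (simp add: power_le_one_iff abs_le_square_iff)
qed

lemma unitary_adj: "unitary_mat n U \<Longrightarrow> unitary_mat n (mat_adjoint U)"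
  unfolding unitary_mat_def by simp

lemma unitary_mult: assumes U: "unitary_mat n U" and V: "unitary_mat n V"
  shows "unitary_mat n (U * V)"
proof -
  have CU: "U \<in> carrier_mat n n" and CV: "V \<in> carrier_mat n n" using U V by auto
  have CU': "mat_adjoint U \<in> carrier_mat n n" and CV': "mat_adjoint V \<in> carrier_mat n n" using CU CV by auto
  have aUV: "mat_adjoint (U * V) = mat_adjoint V * mat_adjoint U" by (rule adj_mult[OF CU CV])
  have "U * V * (mat_adjoint V * mat_adjoint U) = U * (V * (mat_adjoint V * mat_adjoint U))"
    by (rule assoc_mult_mat[OF CU CV mult_carrier_mat[OF CV' CU']])
  also have "V * (mat_adjoint V * mat_adjoint U) = V * mat_adjoint V * mat_adjoint U"
    by (rule assoc_mult_mat[OF CV CV' CU', symmetric])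
  also have "V * mat_adjoint V = 1\<^sub>m n" using V unfolding unitary_mat_def by simp
  also have "1\<^sub>m n * mat_adjoint U = mat_adjoint U" by (rule left_mult_one_mat[OF CU'])
  also have "U * mat_adjoint U = 1\<^sub>m n" using U unfolding unitary_mat_def by simp
  finally have 1: "U * V * mat_adjoint (U * V) = 1\<^sub>m n" unfolding aUV .
  have "mat_adjoint V * mat_adjoint U * (U * V) = mat_adjoint V * (mat_adjoint U * (U * V))"
    by (rule assoc_mult_mat[OF CV' CU' mult_carrier_mat[OF CU CV]])
  also have "mat_adjoint U * (U * V) = mat_adjoint U * U * V"
    by (rule assoc_mult_mat[OF CU' CU CV, symmetric])
  also have "mat_adjoint U * U = 1\<^sub>m n" using U unfolding unitary_mat_def by simp
  also have "1\<^sub>m n * V = V" by (rule left_mult_one_mat[OF CV])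
  also have "mat_adjoint V * V = 1\<^sub>m n" using V unfolding unitary_mat_def by simp
  finally have 2: "mat_adjoint (U * V) * (U * V) = 1\<^sub>m n" unfolding aUV .
  show ?thesis unfolding unitary_mat_def using 1 2 CU CV by simp
qed

lemma mult_sq[simp]: "A \<in> carrier_mat n n \<Longrightarrow> B \<in> carrier_mat n n \<Longrightarrow> A * B \<in> carrier_mat n n"
  by (rule mult_carrier_mat)

lemma cprod_self: assumes w: "(w :: complex vec) \<in> carrier_vec n"
  shows "w \<bullet>c w = complex_of_real (\<Sum>k<n. (cmod (w $ k))^2)"
proof -
  have "w \<bullet>c w = (\<Sum>k\<in>{0..<n}. w $ k * conjugate w $ k)" unfolding scalar_prod_def using w by simp
  also have "\<dots> = (\<Sum>k<n. w $ k * cnj (w $ k))" unfolding atLeast0LessThan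
    by (rule sum.cong[OF refl], insert w, simp add: conjugate_complex_def)
  also have "\<dots> = complex_of_real (\<Sum>k<n. (cmod (w $ k))^2)"
    by (simp only: of_real_sum complex_norm_square)
  finally show ?thesis .
qed

lemma cprod_index: assumes v: "(v :: complex vec) \<in> carrier_vec n" and w: "w \<in> carrier_vec n"
  shows "v \<bullet>c w = (\<Sum>k<n. v $ k * cnj (w $ k))"
proof -
  have "v \<bullet>c w = (\<Sum>k\<in>{0..<n}. v $ k * conjugate w $ k)" unfolding scalar_prod_def using w by simp
  also have "\<dots> = (\<Sum>k<n. v $ k * cnj (w $ k))" unfolding atLeast0LessThan
    by (rule sum.cong[OF refl], insert w, simp add: conjugate_complex_def)
  finally show ?thesis .
qed

lemma unitary_extend: assumes v: "(v :: complex vec) \<in> carrier_vec n" and v0: "v \<noteq> 0\<^sub>v n"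
  shows "\<exists>W c. unitary_mat n W \<and> col W 0 = c \<cdot>\<^sub>v v \<and> c \<noteq> 0"
proof -
  have n: "n \<noteq> 0"
  proof
    assume "n = 0"
    hence "v = 0\<^sub>v n" using v by (intro eq_vecI) auto
    with v0 show False ..
  qed
  interpret cof_vec_space n "TYPE(complex)" .
  define b where "b = basis_completion v"
  define ws where "ws = gram_schmidt n b"
  from basis_completion[OF v v0, folded b_def]
  have dist_b: "distinct b" and indep: "\<not> lin_dep (set b)" and b: "set b \<subseteq> carrier_vec n" and hdb: "hd b = v"
    and len_b: "length b = n" by auto
  from hdb len_b n obtain vs where bv: "b = v # vs" by (cases b, auto)
  from gram_schmidt_result[OF b dist_b indep refl, folded ws_def]
  have ws: "set ws \<subseteq> carrier_vec n" "corthogonal ws" "length ws = n"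
    by (auto simp: len_b)
  from gram_schmidt_hd[OF v, of vs, folded bv] have hdws: "hd ws = v" unfolding ws_def .
  have ws0: "ws ! 0 = v" using hdws ws(3) n by (metis hd_conv_nth list.size(3))
  define r where "r = (\<lambda>i. \<Sum>k<n. (cmod (ws ! i $ k))^2)"
  have wsc: "\<And>i. i < n \<Longrightarrow> ws ! i \<in> carrier_vec n" using ws by auto
  have r_eq: "\<And>i. i < n \<Longrightarrow> ws ! i \<bullet>c ws ! i = complex_of_real (r i)"
    unfolding r_def by (rule cprod_self[OF wsc])
  have r_pos: "\<And>i. i < n \<Longrightarrow> r i > 0"
  proof -
    fix i assume i: "i < n"
    have "ws ! i \<bullet>c ws ! i \<noteq> 0" using ws(2) i ws(3) unfolding corthogonal_def by auto
    hence "r i \<noteq> 0" using r_eq[OF i] by auto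
    moreover have "r i \<ge> 0" unfolding r_def by (intro sum_nonneg) auto
    ultimately show "r i > 0" by simp
  qed
  define c where "c = (\<lambda>i. 1 / sqrt (r i))"
  define W where "W = mat n n (\<lambda>(k,i). complex_of_real (c i) * ws ! i $ k)"
  have W: "W \<in> carrier_mat n n" unfolding W_def by simp
  have WW: "mat_adjoint W * W = 1\<^sub>m n"
  proof (rule eq_matI)
    fix i j assume "i < dim_row (1\<^sub>m n :: complex mat)" "j < dim_col (1\<^sub>m n :: complex mat)"
    hence i: "i < n" and j: "j < n" by auto
    have "(mat_adjoint W * W) $$ (i,j) = (\<Sum>k<n. mat_adjoint W $$ (i,k) * W $$ (k,j))"
      by (rule mult_index[OF _ W i j], insert W, simp)
    also have "\<dots> = (\<Sum>k<n. complex_of_real (c i * c j) * (ws ! j $ k * cnj (ws ! i $ k)))"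
      by (rule sum.cong[OF refl], insert W i j, simp add: W_def)
    also have "\<dots> = complex_of_real (c i * c j) * (ws ! j \<bullet>c ws ! i)"
      by (simp add: sum_distrib_left cprod_index[OF wsc[OF j] wsc[OF i]])
    also have "\<dots> = 1\<^sub>m n $$ (i,j)"
    proof (cases "i = j")
      case True
      have s: "sqrt (r i) * sqrt (r i) = r i" using r_pos[OF i] by simp
      have "c i * c i * r i = 1" unfolding c_def using r_pos[OF i] s by (simp add: field_simps)
      hence "complex_of_real (c i * c i) * complex_of_real (r i) = 1"
        by (metis of_real_1 of_real_mult)
      thus ?thesis using True r_eq[OF i] i by simp
    next
      case False
      have "ws ! j \<bullet>c ws ! i = 0" using ws(2) i j ws(3) False unfolding corthogonal_def by auto
      thus ?thesis using False i j by simp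
    qed
    finally show "(mat_adjoint W * W) $$ (i,j) = 1\<^sub>m n $$ (i,j)" .
  qed (insert W, auto)
  have WW': "W * mat_adjoint W = 1\<^sub>m n"
    by (rule mat_mult_left_right_inverse[OF _ W WW], insert W, simp)
  have U: "unitary_mat n W" unfolding unitary_mat_def using W WW WW' by simp
  have col: "col W 0 = complex_of_real (c 0) \<cdot>\<^sub>v v"
    by (rule eq_vecI, insert v n, auto simp: W_def ws0)
  have "c 0 \<noteq> 0" unfolding c_def using r_pos[of 0] n by simp
  thus ?thesis using U col by (intro exI[of _ W] exI[of _ "complex_of_real (c 0)"]) simp
qed


lemma unitary_lcancel: assumes W: "unitary_mat n W" and X: "X \<in> carrier_mat n m"
  shows "W * (mat_adjoint W * X) = X" "mat_adjoint W * (W * X) = X"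
proof -
  have CW: "W \<in> carrier_mat n n" and CW': "mat_adjoint W \<in> carrier_mat n n" using W by auto
  have "W * (mat_adjoint W * X) = W * mat_adjoint W * X" by (rule assoc_mult_mat[OF CW CW' X, symmetric])
  also have "W * mat_adjoint W = 1\<^sub>m n" using W unfolding unitary_mat_def by simp
  finally show "W * (mat_adjoint W * X) = X" using X by simp
  have "mat_adjoint W * (W * X) = mat_adjoint W * W * X" by (rule assoc_mult_mat[OF CW' CW X, symmetric])
  also have "mat_adjoint W * W = 1\<^sub>m n" using W unfolding unitary_mat_def by simp
  finally show "mat_adjoint W * (W * X) = X" using X by simp
qed

lemma unitary_rcancel: assumes W: "unitary_mat n W" and X: "X \<in> carrier_mat m n"
  shows "X * W * mat_adjoint W = X" "X * mat_adjoint W * W = X"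
proof -
  have CW: "W \<in> carrier_mat n n" and CW': "mat_adjoint W \<in> carrier_mat n n" using W by auto
  have "X * W * mat_adjoint W = X * (W * mat_adjoint W)" by (rule assoc_mult_mat[OF X CW CW'])
  also have "W * mat_adjoint W = 1\<^sub>m n" using W unfolding unitary_mat_def by simp
  finally show "X * W * mat_adjoint W = X" using X by simp
  have "X * mat_adjoint W * W = X * (mat_adjoint W * W)" by (rule assoc_mult_mat[OF X CW' CW])
  also have "mat_adjoint W * W = 1\<^sub>m n" using W unfolding unitary_mat_def by simp
  finally show "X * mat_adjoint W * W = X" using X by simp
qed

lemma hm_conj: assumes W: "W \<in> carrier_mat n n" and B: "B \<in> carrier_mat n n"
  shows "W * hm n B a * mat_adjoint W = hm n (W * B) a"
  unfolding hm_def adj_mult[OF W B] using W B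
  by (simp add: assoc_mult_mat[of _ n n _ n _ n])

lemma unitary_conj_back: assumes W: "unitary_mat n W" and A: "A \<in> carrier_mat n n"
  shows "W * (mat_adjoint W * A * W) * mat_adjoint W = A"
proof -
  have CW: "W \<in> carrier_mat n n" and CW': "mat_adjoint W \<in> carrier_mat n n" using W by auto
  have "W * (mat_adjoint W * A * W) * mat_adjoint W = W * (mat_adjoint W * (A * (W * mat_adjoint W)))"
    using CW CW' A by (simp add: assoc_mult_mat[of _ n n _ n _ n])
  also have "W * mat_adjoint W = 1\<^sub>m n" using W unfolding unitary_mat_def by simp
  also have "A * 1\<^sub>m n = A" using A by simp
  also have "W * (mat_adjoint W * A) = A" by (rule unitary_lcancel(1)[OF W A])
  finally show ?thesis .
qed

lemma spectral_thm: "A \<in> carrier_mat n n \<Longrightarrow> mat_adjoint A = A \<Longrightarrow> \<exists>U a. unitary_mat n U \<and> A = hm n U a"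
proof (induction n arbitrary: A)
  case 0
  have U: "unitary_mat 0 (1\<^sub>m 0)" unfolding unitary_mat_def by simp
  have C1: "(1\<^sub>m 0 :: complex mat) \<in> carrier_mat 0 0" by simp
  have "A = hm 0 (1\<^sub>m 0) (\<lambda>_. 0)"
    by (rule eq_matI, insert 0 hm_dims[OF C1], simp_all)
  thus ?case using U by blast
next
  case (Suc n)
  let ?N = "Suc n"
  have A: "A \<in> carrier_mat ?N ?N" and hA: "mat_adjoint A = A" using Suc.prems by auto
  obtain e where e: "e \<in> spectrum A" using spectrum_non_empty[OF A] by auto
  then obtain v where ev: "eigenvector A v e" unfolding spectrum_def eigenvalue_def by auto
  have v: "v \<in> carrier_vec ?N" and v0: "v \<noteq> 0\<^sub>v ?N" and Av: "A *\<^sub>v v = e \<cdot>\<^sub>v v"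
    using ev A unfolding eigenvector_def by auto
  obtain W c where W: "unitary_mat ?N W" and cW: "col W 0 = c \<cdot>\<^sub>v v" and c0: "c \<noteq> 0"
    using unitary_extend[OF v v0] by blast
  have CW: "W \<in> carrier_mat ?N ?N" and CW': "mat_adjoint W \<in> carrier_mat ?N ?N" using W by auto
  define A' where "A' = mat_adjoint W * A * W"
  have CA': "A' \<in> carrier_mat ?N ?N" unfolding A'_def using CW CW' A by simp
  have A'2: "A' = mat_adjoint W * (A * W)" unfolding A'_def by (rule assoc_mult_mat[OF CW' A CW])
  have hA': "mat_adjoint A' = A'"
  proof -
    have "mat_adjoint A' = mat_adjoint (A * W) * W"
      unfolding A'2 adj_mult[OF CW' mult_sq[OF A CW]] by simp
    also have "\<dots> = mat_adjoint W * A * W" unfolding adj_mult[OF A CW] hA ..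
    finally show ?thesis unfolding A'_def .
  qed
  have colAW: "col (A * W) 0 = e \<cdot>\<^sub>v col W 0"
  proof -
    have "col (A * W) 0 = A *\<^sub>v col W 0" by (rule col_mult2[OF A CW], simp)
    also have "\<dots> = A *\<^sub>v (c \<cdot>\<^sub>v v)" unfolding cW ..
    also have "\<dots> = c \<cdot>\<^sub>v (A *\<^sub>v v)" by (rule mult_mat_vec[OF A v])
    also have "\<dots> = e \<cdot>\<^sub>v (c \<cdot>\<^sub>v v)" unfolding Av by (simp add: smult_smult_assoc mult.commute)
    finally show ?thesis unfolding cW .
  qed
  have AW0: "(A * W) $$ (k,0) = e * W $$ (k,0)" if k: "k < ?N" for k
  proof -
    have "(A * W) $$ (k,0) = col (A * W) 0 $ k" by (rule index_col[symmetric], insert k A CW, simp_all)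
    also have "\<dots> = e * W $$ (k,0)" unfolding colAW using k CW by simp
    finally show ?thesis .
  qed
  have A'0: "A' $$ (i,0) = (if i = 0 then e else 0)" if i: "i < ?N" for i
  proof -
    have "A' $$ (i,0) = (\<Sum>k<?N. mat_adjoint W $$ (i,k) * (A * W) $$ (k,0))"
      unfolding A'2 by (rule mult_index[OF CW' mult_sq[OF A CW] i], simp)
    also have "\<dots> = (\<Sum>k<?N. e * (cnj (W $$ (k,i)) * W $$ (k,0)))"
      by (rule sum.cong[OF refl], insert i CW, simp add: AW0)
    also have "\<dots> = e * (\<Sum>k<?N. cnj (W $$ (k,i)) * W $$ (k,0))" by (rule sum_distrib_left[symmetric])
    also have "\<dots> = (if i = 0 then e else 0)" using unitary_cols[OF W i, of 0] by simp
    finally show ?thesis .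
  qed
  have A'sym: "A' $$ (i,j) = cnj (A' $$ (j,i))" if i: "i < ?N" and j: "j < ?N" for i j
  proof -
    have "A' $$ (i,j) = mat_adjoint A' $$ (i,j)" using hA' by simp
    also have "\<dots> = cnj (A' $$ (j,i))" using i j CA' by simp
    finally show ?thesis .
  qed
  have A0': "A' $$ (0,j) = (if j = 0 then e else 0)" if j: "j < ?N" for j
  proof (cases "j = 0")
    case True thus ?thesis using A'0[of 0] by simp
  next
    case False thus ?thesis using A'sym[of 0 j] A'0[OF j] j by simp
  qed
  have ereal: "cnj e = e" using A'sym[of 0 0] A'0[of 0] by simp
  hence ere: "complex_of_real (Re e) = e" using ereal by (simp add: complex_eq_iff)
  define A3 where "A3 = mat n n (\<lambda>(i,j). A' $$ (Suc i, Suc j))"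
  have CA3: "A3 \<in> carrier_mat n n" unfolding A3_def by simp
  have hA3: "mat_adjoint A3 = A3"
  proof (rule eq_matI)
    fix i j assume "i < dim_row A3" "j < dim_col A3"
    hence i: "i < n" and j: "j < n" using CA3 by simp_all
    show "mat_adjoint A3 $$ (i, j) = A3 $$ (i, j)" using i j CA3 A'sym[of "Suc i" "Suc j"] by (simp add: A3_def)
  qed (use CA3 in simp_all)
  from Suc.IH[OF CA3 hA3] obtain U3 a3 where U3: "unitary_mat n U3" and A3eq: "A3 = hm n U3 a3" by blast
  have CU3: "U3 \<in> carrier_mat n n" using U3 by simp
  define B where "B = mat ?N ?N (\<lambda>(i,j). if i = 0 \<and> j = 0 then 1 else if i = 0 \<or> j = 0 then 0 else U3 $$ (i - 1, j - 1))"
  have CB: "B \<in> carrier_mat ?N ?N" unfolding B_def by simp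
  have CB': "mat_adjoint B \<in> carrier_mat ?N ?N" using CB by simp
  have BB: "B * mat_adjoint B = 1\<^sub>m ?N"
  proof (rule eq_matI)
    fix i j assume "i < dim_row (1\<^sub>m ?N :: complex mat)" "j < dim_col (1\<^sub>m ?N :: complex mat)"
    hence i: "i < ?N" and j: "j < ?N" by auto
    have "(B * mat_adjoint B) $$ (i,j) = (\<Sum>k<?N. B $$ (i,k) * mat_adjoint B $$ (k,j))"
      by (rule mult_index[OF CB CB' i j])
    also have "\<dots> = (\<Sum>k<?N. B $$ (i,k) * cnj (B $$ (j,k)))"
      by (rule sum.cong[OF refl], insert CB j, simp)
    also have "\<dots> = B $$ (i,0) * cnj (B $$ (j,0)) + (\<Sum>k<n. B $$ (i,Suc k) * cnj (B $$ (j,Suc k)))"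
      by (rule sum.lessThan_Suc_shift)
    also have "\<dots> = 1\<^sub>m ?N $$ (i,j)"
    proof (cases i)
      case 0 thus ?thesis using j by (simp add: B_def)
    next
      case (Suc i')
      show ?thesis
      proof (cases j)
        case 0 thus ?thesis using i Suc by (simp add: B_def)
      next
        case (Suc j')
        have "(\<Sum>k<n. B $$ (i,Suc k) * cnj (B $$ (j,Suc k))) = (\<Sum>k<n. U3 $$ (i',k) * cnj (U3 $$ (j',k)))"
          by (rule sum.cong[OF refl], insert i j \<open>i = Suc i'\<close> Suc, simp add: B_def)
        also have "\<dots> = (if i' = j' then 1 else 0)" by (rule unitary_rows[OF U3], insert i j \<open>i = Suc i'\<close> Suc, auto)
        finally show ?thesis using i j \<open>i = Suc i'\<close> Suc by (simp add: B_def)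
      qed
    qed
    finally show "(B * mat_adjoint B) $$ (i,j) = 1\<^sub>m ?N $$ (i,j)" .
  qed (use CB in simp_all)
  have BB': "mat_adjoint B * B = 1\<^sub>m ?N" by (rule mat_mult_left_right_inverse[OF CB CB' BB])
  have UB: "unitary_mat ?N B" unfolding unitary_mat_def using CB BB BB' by simp
  define a where "a = (\<lambda>i. if i = 0 then Re e else a3 (i - 1))"
  have A'eq: "A' = hm ?N B a"
  proof (rule eq_matI)
    fix i j assume "i < dim_row (hm ?N B a)" "j < dim_col (hm ?N B a)"
    hence i: "i < ?N" and j: "j < ?N" using CB by auto
    have "hm ?N B a $$ (i,j) = (\<Sum>k<?N. B $$ (i,k) * a k * cnj (B $$ (j,k)))" by (rule hm_index[OF CB i j])
    also have "\<dots> = B $$ (i,0) * a 0 * cnj (B $$ (j,0)) + (\<Sum>k<n. B $$ (i,Suc k) * a (Suc k) * cnj (B $$ (j,Suc k)))"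
      by (rule sum.lessThan_Suc_shift)
    also have "\<dots> = A' $$ (i,j)"
    proof (cases i)
      case 0 thus ?thesis using j A0'[OF j] ere by (simp add: B_def a_def)
    next
      case (Suc i')
      show ?thesis
      proof (cases j)
        case 0 thus ?thesis using i Suc A'0[OF i] by (simp add: B_def)
      next
        case (Suc j')
        have "(\<Sum>k<n. B $$ (i,Suc k) * a (Suc k) * cnj (B $$ (j,Suc k))) = (\<Sum>k<n. U3 $$ (i',k) * a3 k * cnj (U3 $$ (j',k)))"
          by (rule sum.cong[OF refl], insert i j \<open>i = Suc i'\<close> Suc, simp add: B_def a_def)
        also have "\<dots> = hm n U3 a3 $$ (i',j')" by (rule hm_index[OF CU3, symmetric], insert i j \<open>i = Suc i'\<close> Suc, auto)
        also have "\<dots> = A' $$ (i,j)" unfolding A3eq[symmetric] using i j \<open>i = Suc i'\<close> Suc by (simp add: A3_def)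
        finally show ?thesis using i j \<open>i = Suc i'\<close> Suc by (simp add: B_def)
      qed
    qed
    finally show "A' $$ (i,j) = hm ?N B a $$ (i,j)" ..
  qed (use CB CA' in simp_all)
  have "A = W * A' * mat_adjoint W" unfolding A'_def by (rule unitary_conj_back[OF W A, symmetric])
  also have "\<dots> = hm ?N (W * B) a" unfolding A'eq by (rule hm_conj[OF CW CB])
  finally show ?case using unitary_mult[OF W UB] by blast
qed

lemma hm_unique: assumes U: "unitary_mat n U" and V: "unitary_mat n V" and eq: "hm n U a = hm n V b"
  shows "hm n U (\<lambda>i. f (a i)) = hm n V (\<lambda>i. f (b i))"
proof -
  have CU: "U \<in> carrier_mat n n" and CV: "V \<in> carrier_mat n n" using U V by auto
  have CU': "mat_adjoint U \<in> carrier_mat n n" and CV': "mat_adjoint V \<in> carrier_mat n n" using CU CV by auto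
  define N where "N = mat_adjoint V * U"
  have CN: "N \<in> carrier_mat n n" unfolding N_def using CU CV' by simp
  have 1: "mat_adjoint V * hm n U a * U = N * rdiag n a"
  proof -
    have "mat_adjoint V * hm n U a * U = mat_adjoint V * (U * rdiag n a * mat_adjoint U * U)"
      unfolding hm_def using CU CV' by (simp add: assoc_mult_mat[of _ n n _ n _ n])
    also have "U * rdiag n a * mat_adjoint U * U = U * rdiag n a" by (rule unitary_rcancel(2)[OF U mult_sq[OF CU rdiag_carrier]])
    finally show ?thesis unfolding N_def using CU CV' by (simp add: assoc_mult_mat[of _ n n _ n _ n])
  qed
  have 2: "mat_adjoint V * hm n V b * U = rdiag n b * N"
  proof -
    have "mat_adjoint V * hm n V b * U = (mat_adjoint V * (V * (rdiag n b * mat_adjoint V))) * U"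
      unfolding hm_def using CV CV' by (simp add: assoc_mult_mat[of _ n n _ n _ n])
    also have "mat_adjoint V * (V * (rdiag n b * mat_adjoint V)) = rdiag n b * mat_adjoint V"
      by (rule unitary_lcancel(2)[OF V mult_sq[OF rdiag_carrier CV']])
    finally show ?thesis unfolding N_def using CU CV' by (simp add: assoc_mult_mat[of _ n n _ n _ n])
  qed
  have NDa: "N * rdiag n a = rdiag n b * N" using 1 2 eq by simp
  have ent: "N $$ (i,j) * a j = b i * N $$ (i,j)" if i: "i < n" and j: "j < n" for i j
  proof -
    have "(N * rdiag n a) $$ (i,j) = (rdiag n b * N) $$ (i,j)" using NDa by simp
    thus ?thesis using rdiag_mult_right[OF CN i j] rdiag_mult_left[OF CN i j] by simp
  qed
  have NDf: "N * rdiag n (\<lambda>i. f (a i)) = rdiag n (\<lambda>i. f (b i)) * N"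
  proof (rule eq_matI)
    fix i j assume "i < dim_row (rdiag n (\<lambda>i. f (b i)) * N)" "j < dim_col (rdiag n (\<lambda>i. f (b i)) * N)"
    hence i: "i < n" and j: "j < n" using CN by simp_all
    have "N $$ (i,j) * f (a j) = f (b i) * N $$ (i,j)"
    proof (cases "N $$ (i,j) = 0")
      case False
      hence "complex_of_real (a j) = complex_of_real (b i)" using ent[OF i j] by (simp add: mult.commute)
      hence "a j = b i" by simp
      thus ?thesis by (simp add: mult.commute)
    qed simp
    thus "(N * rdiag n (\<lambda>i. f (a i))) $$ (i,j) = (rdiag n (\<lambda>i. f (b i)) * N) $$ (i,j)"
      using rdiag_mult_right[OF CN i j] rdiag_mult_left[OF CN i j] by simp
  qed (use CN in simp_all)
  have UVN: "U = V * N" unfolding N_def by (rule unitary_lcancel(1)[OF V CU, symmetric])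
  have "hm n U (\<lambda>i. f (a i)) = V * ((N * rdiag n (\<lambda>i. f (a i))) * mat_adjoint U)"
    unfolding hm_def using CV CN CU' by (subst (1) UVN) (simp add: assoc_mult_mat[of _ n n _ n _ n])
  also have "\<dots> = V * (rdiag n (\<lambda>i. f (b i)) * N * mat_adjoint U)" by (simp only: NDf)
  also have "\<dots> = V * (rdiag n (\<lambda>i. f (b i)) * (mat_adjoint V * (U * mat_adjoint U)))"
    unfolding N_def using CV' CU CU' by (simp add: assoc_mult_mat[of _ n n _ n _ n])
  also have "U * mat_adjoint U = 1\<^sub>m n" using U unfolding unitary_mat_def by simp
  also have "mat_adjoint V * 1\<^sub>m n = mat_adjoint V" by (rule right_mult_one_mat[OF CV'])
  finally show ?thesis unfolding hm_def using CV CV' by (simp add: assoc_mult_mat[of _ n n _ n _ n])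
qed

lemma matfun_hm: assumes U: "unitary_mat n U" shows "matfun n f (hm n U a) = hm n U (\<lambda>i. f (a i))"
proof -
  let ?P = "\<lambda>B. \<exists>U' lam. unitary_mat n U' \<and> hm n U a = hm n U' lam \<and> B = hm n U' (\<lambda>i. f (lam i))"
  have ex: "\<exists>B. ?P B" using U by blast
  have m: "matfun n f (hm n U a) = (SOME B. ?P B)"
    unfolding matfun_def hm_def rdiag_def ..
  from someI_ex[OF ex] obtain U' lam where U': "unitary_mat n U'" and e: "hm n U a = hm n U' lam"
    and B: "(SOME B. ?P B) = hm n U' (\<lambda>i. f (lam i))" by blast
  show ?thesis unfolding m B using hm_unique[OF U U' e, of f] by simp
qed

lemma mtrace_rdiag_mult: assumes H: "H \<in> carrier_mat n n"
  shows "mtrace (rdiag n a * H) = (\<Sum>i<n. a i * H $$ (i,i))"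
proof -
  have C: "rdiag n a * H \<in> carrier_mat n n" using H by simp
  show ?thesis unfolding mtrace_alt[OF C] by (rule sum.cong[OF refl], rule rdiag_mult_left[OF H], simp_all)
qed

lemma trace_hm_hm: assumes U: "U \<in> carrier_mat n n" and V: "V \<in> carrier_mat n n"
  shows "mtrace (hm n U a * hm n V b) =
    complex_of_real (\<Sum>i<n. \<Sum>j<n. a i * b j * (cmod ((mat_adjoint U * V) $$ (i,j)))^2)"
proof -
  have U': "mat_adjoint U \<in> carrier_mat n n" using U by simp
  define N where "N = mat_adjoint U * V"
  have CN: "N \<in> carrier_mat n n" unfolding N_def using U' V by simp
  have "hm n U a * hm n V b = U * (rdiag n a * mat_adjoint U * hm n V b)"
    unfolding hm_def using U V U' by (simp add: assoc_mult_mat[of _ n n _ n _ n])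
  hence "mtrace (hm n U a * hm n V b) = mtrace ((rdiag n a * mat_adjoint U * hm n V b) * U)"
    using mtrace_mult_comm[OF U, of "rdiag n a * mat_adjoint U * hm n V b"] U' V by simp
  also have "(rdiag n a * mat_adjoint U * hm n V b) * U = rdiag n a * (mat_adjoint U * hm n V b * mat_adjoint (mat_adjoint U))"
    using U V U' by (simp add: assoc_mult_mat[of _ n n _ n _ n])
  also have "mat_adjoint U * hm n V b * mat_adjoint (mat_adjoint U) = hm n N b"
    unfolding N_def by (rule hm_conj[OF U' V])
  also have "mtrace (rdiag n a * hm n N b) = (\<Sum>i<n. a i * hm n N b $$ (i,i))"
    by (rule mtrace_rdiag_mult, insert CN, simp)
  also have "\<dots> = (\<Sum>i<n. complex_of_real (\<Sum>j<n. a i * b j * (cmod (N $$ (i,j)))^2))"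
  proof (rule sum.cong[OF refl])
    fix i assume "i \<in> {..<n}" hence i: "i < n" by simp
    have "hm n N b $$ (i,i) = (\<Sum>j<n. N $$ (i,j) * b j * cnj (N $$ (i,j)))" by (rule hm_index[OF CN i i])
    also have "\<dots> = (\<Sum>j<n. complex_of_real (b j * (cmod (N $$ (i,j)))^2))"
      by (rule sum.cong[OF refl], simp only: of_real_mult complex_norm_square, simp only: mult.commute mult.left_commute)
    finally show "a i * hm n N b $$ (i,i) = complex_of_real (\<Sum>j<n. a i * b j * (cmod (N $$ (i,j)))^2)"
      by (simp add: sum_distrib_left mult.assoc)
  qed
  also have "\<dots> = complex_of_real (\<Sum>i<n. \<Sum>j<n. a i * b j * (cmod (N $$ (i,j)))^2)"
    by (simp only: of_real_sum)
  finally show ?thesis unfolding N_def .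
qed

lemma hm_mult_same: assumes W: "unitary_mat n W"
  shows "hm n W a * hm n W b = hm n W (\<lambda>i. a i * b i)"
proof -
  have CW: "W \<in> carrier_mat n n" and CW': "mat_adjoint W \<in> carrier_mat n n" using W by auto
  have "hm n W a * hm n W b = W * (rdiag n a * (mat_adjoint W * (W * (rdiag n b * mat_adjoint W))))"
    unfolding hm_def using CW CW' by (simp add: assoc_mult_mat[of _ n n _ n _ n])
  also have "mat_adjoint W * (W * (rdiag n b * mat_adjoint W)) = rdiag n b * mat_adjoint W"
    by (rule unitary_lcancel(2)[OF W mult_sq[OF rdiag_carrier CW']])
  also have "rdiag n a * (rdiag n b * mat_adjoint W) = rdiag n (\<lambda>i. a i * b i) * mat_adjoint W"
    by (subst assoc_mult_mat[OF rdiag_carrier rdiag_carrier CW', symmetric]) (simp add: rdiag_mult)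
  finally show ?thesis unfolding hm_def using CW CW' by (simp add: assoc_mult_mat[of _ n n _ n _ n])
qed

lemma trace_hm: assumes W: "unitary_mat n W" shows "mtrace (hm n W a) = complex_of_real (\<Sum>i<n. a i)"
proof -
  have CW: "W \<in> carrier_mat n n" and CW': "mat_adjoint W \<in> carrier_mat n n" using W by auto
  have "hm n W a = W * (rdiag n a * mat_adjoint W)" unfolding hm_def
    by (rule assoc_mult_mat[OF CW rdiag_carrier CW'])
  hence "mtrace (hm n W a) = mtrace (rdiag n a * mat_adjoint W * W)"
    using mtrace_mult_comm[OF CW mult_sq[OF rdiag_carrier CW']] by simp
  also have "rdiag n a * mat_adjoint W * W = rdiag n a" by (rule unitary_rcancel(2)[OF W rdiag_carrier])
  also have "mtrace (rdiag n a) = (\<Sum>i<n. complex_of_real (a i))" unfolding mtrace_alt[OF rdiag_carrier] by simp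
  finally show ?thesis by simp
qed

lemma hm_eigen: assumes W: "unitary_mat n W" and i: "i < n"
  shows "hm n W a *\<^sub>v col W i = complex_of_real (a i) \<cdot>\<^sub>v col W i"
proof -
  have CW: "W \<in> carrier_mat n n" using W by auto
  have "hm n W a * W = W * rdiag n a" unfolding hm_def by (rule unitary_rcancel(2)[OF W mult_sq[OF CW rdiag_carrier]])
  moreover have "col (hm n W a * W) i = hm n W a *\<^sub>v col W i" by (rule col_mult2[OF hm_carrier[OF CW] CW i])
  ultimately have "hm n W a *\<^sub>v col W i = col (W * rdiag n a) i" by simp
  also have "\<dots> = complex_of_real (a i) \<cdot>\<^sub>v col W i"
  proof (rule eq_vecI)
    fix k assume "k < dim_vec (complex_of_real (a i) \<cdot>\<^sub>v col W i)"
    hence k: "k < n" using CW by simp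
    have "col (W * rdiag n a) i $ k = (W * rdiag n a) $$ (k,i)" by (rule index_col, insert CW k i, simp_all)
    also have "\<dots> = W $$ (k,i) * a i" by (rule rdiag_mult_right[OF CW k i])
    finally show "col (W * rdiag n a) i $ k = (complex_of_real (a i) \<cdot>\<^sub>v col W i) $ k"
      using k i CW by (simp add: mult.commute)
  qed (use CW in simp)
  finally show ?thesis .
qed

lemma col_unit_sq: assumes W: "unitary_mat n W" and i: "i < n"
  shows "conjugate (col W i) \<bullet> col W i = 1"
proof -
  have CW: "W \<in> carrier_mat n n" using W by auto
  have "conjugate (col W i) \<bullet> col W i = (\<Sum>k\<in>{0..<n}. conjugate (col W i) $ k * col W i $ k)"
    unfolding scalar_prod_def using CW by simp
  also have "\<dots> = (\<Sum>k<n. cnj (W $$ (k,i)) * W $$ (k,i))" unfolding atLeast0LessThan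
    by (rule sum.cong[OF refl], insert CW i, simp add: conjugate_complex_def)
  also have "\<dots> = 1" using unitary_cols[OF W i i] by simp
  finally show ?thesis .
qed

lemma hm_quad: assumes W: "unitary_mat n W" and i: "i < n"
  shows "conjugate (col W i) \<bullet> (hm n W a *\<^sub>v col W i) = complex_of_real (a i)"
proof -
  have CW: "W \<in> carrier_mat n n" using W by auto
  have c: "col W i \<in> carrier_vec n" by (rule carrier_vecI, simp add: carrier_matD(1)[OF CW])
  have "conjugate (col W i) \<bullet> (complex_of_real (a i) \<cdot>\<^sub>v col W i) = complex_of_real (a i) * (conjugate (col W i) \<bullet> col W i)"
    by (rule scalar_prod_smult_right, rule dim_vec_conjugate)
  thus ?thesis unfolding hm_eigen[OF W i] col_unit_sq[OF W i] by simp
qed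

lemma hm_spectrum: assumes W: "unitary_mat n W" and i: "i < n"
  shows "complex_of_real (a i) \<in> spectrum (hm n W a)"
proof -
  have CW: "W \<in> carrier_mat n n" using W by auto
  have c: "col W i \<in> carrier_vec n" by (rule carrier_vecI, simp add: carrier_matD(1)[OF CW])
  have "col W i \<noteq> 0\<^sub>v n"
  proof
    assume "col W i = 0\<^sub>v n"
    hence "conjugate (col W i) \<bullet> col W i = 0" by simp
    thus False using col_unit_sq[OF W i] by simp
  qed
  hence "eigenvector (hm n W a) (col W i) (complex_of_real (a i))"
    unfolding eigenvector_def using c CW hm_eigen[OF W i] by simp
  thus ?thesis unfolding spectrum_def eigenvalue_def by auto
qed

lemma density_decomp: assumes rho: "density_op n \<rho>"
  shows "\<exists>U p. unitary_mat n U \<and> \<rho> = hm n U p \<and> (\<forall>i<n. p i \<ge> 0) \<and> (\<Sum>i<n. p i) = 1"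
proof -
  have C: "\<rho> \<in> carrier_mat n n" and h: "mat_adjoint \<rho> = \<rho>"
    and q: "\<And>v. v \<in> carrier_vec n \<Longrightarrow> Re (conjugate v \<bullet> (\<rho> *\<^sub>v v)) \<ge> 0" and tr: "mtrace \<rho> = 1"
    using rho unfolding density_op_def psd_mat_def hermitian_mat_def by auto
  obtain U p where U: "unitary_mat n U" and e: "\<rho> = hm n U p" using spectral_thm[OF C h] by blast
  have CU: "U \<in> carrier_mat n n" using U by simp
  have "p i \<ge> 0" if i: "i < n" for i
  proof -
    have c: "col U i \<in> carrier_vec n" by (rule carrier_vecI, simp add: carrier_matD(1)[OF CU])
    have "Re (conjugate (col U i) \<bullet> (\<rho> *\<^sub>v col U i)) \<ge> 0" by (rule q[OF c])
    thus ?thesis unfolding e hm_quad[OF U i] by simp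
  qed
  moreover have "(\<Sum>i<n. p i) = 1" using tr unfolding e trace_hm[OF U] by (metis of_real_eq_1_iff)
  ultimately show ?thesis using U e by blast
qed

lemma trace_norm_hm: assumes W: "unitary_mat n W" shows "trace_norm n (hm n W d) = (\<Sum>i<n. \<bar>d i\<bar>)"
proof -
  have CW: "W \<in> carrier_mat n n" using W by simp
  have "mat_adjoint (hm n W d) * hm n W d = hm n W (\<lambda>i. d i * d i)"
    unfolding hm_hermitian[OF CW] by (rule hm_mult_same[OF W])
  hence "matfun n sqrt (mat_adjoint (hm n W d) * hm n W d) = hm n W (\<lambda>i. sqrt (d i * d i))"
    using matfun_hm[OF W] by simp
  also have "(\<lambda>i. sqrt (d i * d i)) = (\<lambda>i. \<bar>d i\<bar>)" by simp
  finally have X: "matfun n sqrt (mat_adjoint (hm n W d) * hm n W d) = hm n W (\<lambda>i. \<bar>d i\<bar>)" .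
  show ?thesis unfolding trace_norm_def X trace_hm[OF W] by simp
qed

lemma lambda_min_le: assumes U: "unitary_mat n U" and i: "i < n"
  shows "lambda_min (hm n U s) \<le> s i"
proof -
  have CU: "U \<in> carrier_mat n n" using U by simp
  have fin: "finite (spectrum (hm n U s))" by (rule card_finite_spectrum(1)[OF hm_carrier[OF CU]])
  have "s i \<in> Re ` spectrum (hm n U s)" using hm_spectrum[OF U i, of s] by (metis Re_complex_of_real image_eqI)
  thus ?thesis unfolding lambda_min_def using fin by simp
qed

lemma cf_index: assumes P: "P \<in> carrier_mat n n" and Q: "Q \<in> carrier_mat n n" and i: "i < n" and j: "j < n"
  shows "(P * rdiag n c * mat_adjoint Q) $$ (i,j) = (\<Sum>k<n. P $$ (i,k) * c k * cnj (Q $$ (j,k)))"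
proof -
  have "(P * rdiag n c * mat_adjoint Q) $$ (i,j) = (\<Sum>k<n. (P * rdiag n c) $$ (i,k) * mat_adjoint Q $$ (k,j))"
    by (rule mult_index[of _ n n _ n], insert P Q i j, simp_all)
  also have "\<dots> = (\<Sum>k<n. P $$ (i,k) * c k * cnj (Q $$ (j,k)))"
    by (rule sum.cong[OF refl], subst rdiag_mult_right[OF P i], simp, insert Q j, simp)
  finally show ?thesis .
qed

lemma cf_bound: assumes P: "unitary_mat n P" and Q: "unitary_mat n Q" and i: "i < n" and j: "j < n"
  shows "cmod ((P * rdiag n c * mat_adjoint Q) $$ (i,j)) \<le> (\<Sum>k<n. \<bar>c k\<bar>)"
proof -
  have CP: "P \<in> carrier_mat n n" and CQ: "Q \<in> carrier_mat n n" using P Q by auto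
  have "cmod ((P * rdiag n c * mat_adjoint Q) $$ (i,j)) = cmod (\<Sum>k<n. P $$ (i,k) * c k * cnj (Q $$ (j,k)))"
    unfolding cf_index[OF CP CQ i j] ..
  also have "\<dots> \<le> (\<Sum>k<n. cmod (P $$ (i,k) * c k * cnj (Q $$ (j,k))))" by (rule norm_sum)
  also have "\<dots> \<le> (\<Sum>k<n. \<bar>c k\<bar>)"
  proof (rule sum_mono)
    fix k assume "k \<in> {..<n}" hence k: "k < n" by simp
    have "cmod (P $$ (i,k) * c k * cnj (Q $$ (j,k))) = cmod (P $$ (i,k)) * \<bar>c k\<bar> * cmod (Q $$ (j,k))"
      by (simp add: norm_mult)
    also have "\<dots> \<le> 1 * \<bar>c k\<bar> * 1"
      by (intro mult_mono unitary_entry_le1[OF P i k] unitary_entry_le1[OF Q j k]) auto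
    finally show "cmod (P $$ (i,k) * c k * cnj (Q $$ (j,k))) \<le> \<bar>c k\<bar>" by simp
  qed
  finally show ?thesis .
qed

lemma hm_minus_herm: assumes A: "(A :: complex mat) \<in> carrier_mat n n" "mat_adjoint A = A" and B: "B \<in> carrier_mat n n" "mat_adjoint B = B"
  shows "A - B \<in> carrier_mat n n" "mat_adjoint (A - B) = A - B"
  using adj_minus[OF A(1) B(1)] A B by (auto intro: minus_carrier_mat)


lemma gibbs_pt: assumes p: "(p::real) \<ge> 0" and x: "x > 0"
  shows "p * ln x \<le> p * ln p + x - p"
proof (cases "p = 0")
  case True thus ?thesis using x by simp
next
  case False
  hence pp: "p > 0" using p by simp
  have "ln (x / p) \<le> x / p - 1" by (rule ln_le_minus_one, insert pp x, simp)
  hence "ln x - ln p \<le> x / p - 1" using pp x by (simp add: ln_div)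
  hence "p * (ln x - ln p) \<le> p * (x / p - 1)" by (rule mult_left_mono, insert p)
  thus ?thesis using pp by (simp add: algebra_simps)
qed

lemma entropy_classical:
  fixes n :: nat and p q x \<delta> :: "nat \<Rightarrow> real" and M K :: "nat \<Rightarrow> nat \<Rightarrow> real" and \<tau> \<epsilon> :: real
  assumes n: "n > 0"
    and p0: "\<And>i. i < n \<Longrightarrow> p i \<ge> 0" and q0: "\<And>i. i < n \<Longrightarrow> q i \<ge> 0"
    and p1: "(\<Sum>i<n. p i) = 1" and q1: "(\<Sum>i<n. q i) = 1"
    and M0: "\<And>i j. i < n \<Longrightarrow> j < n \<Longrightarrow> M i j \<ge> 0"
    and K0: "\<And>i j. i < n \<Longrightarrow> j < n \<Longrightarrow> K i j \<ge> 0"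
    and Mr: "\<And>i. i < n \<Longrightarrow> (\<Sum>j<n. M i j) = 1"
    and Mc: "\<And>j. j < n \<Longrightarrow> (\<Sum>i<n. M i j) = 1"
    and Kr: "\<And>i. i < n \<Longrightarrow> (\<Sum>j<n. K i j) = 1"
    and d0: "(\<Sum>k<n. \<delta> k) = 0" and dE: "(\<Sum>k<n. \<bar>\<delta> k\<bar>) \<le> \<epsilon>"
    and tau: "0 < \<tau>" "\<tau> < 1"
    and x_def: "x = (\<lambda>j. (1 - \<tau>) * q j + \<tau> / n)"
    and ident: "(\<Sum>i<n. \<Sum>j<n. p i * ln (x j) * M i j) =
                (\<Sum>j<n. q j * ln (x j)) + (\<Sum>k<n. \<Sum>j<n. \<delta> k * ln (x j) * K k j)"
  shows "(\<Sum>i<n. p i * ln (p i)) \<ge> (\<Sum>i<n. q i * ln (q i)) + ln (1 - \<tau>) - \<epsilon> / 2 * ln (n / \<tau>)"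
proof -
  have nr: "real n \<ge> 1" using n by simp
  have q1': "q j \<le> 1" if j: "j < n" for j
  proof -
    have "q j \<le> (\<Sum>i<n. q i)" by (rule member_le_sum, insert j q0, auto)
    thus ?thesis using q1 by simp
  qed
  have tn: "\<tau> / n \<le> \<tau>" using nr tau by (simp add: divide_le_eq)
  have tnp: "\<tau> / n > 0" using tau n by simp
  have xpos: "x j \<ge> \<tau> / n" if j: "j < n" for j
    unfolding x_def using q0[OF j] tau by simp
  have xle1: "x j \<le> 1" if j: "j < n" for j
  proof -
    have "(1 - \<tau>) * q j \<le> (1 - \<tau>) * 1" by (rule mult_left_mono, insert q1'[OF j] tau, auto)
    thus ?thesis unfolding x_def using tn by simp
  qed
  have xsum: "(\<Sum>j<n. x j) = 1"
  proof -
    have "(\<Sum>j<n. x j) = (1 - \<tau>) * (\<Sum>j<n. q j) + real n * (\<tau> / n)"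
      unfolding x_def by (simp add: sum.distrib sum_distrib_left)
    also have "\<dots> = 1" using q1 n by simp
    finally show ?thesis .
  qed
  have "(\<Sum>i<n. \<Sum>j<n. p i * ln (x j) * M i j) \<le> (\<Sum>i<n. \<Sum>j<n. (p i * ln (p i) + x j - p i) * M i j)"
  proof (rule sum_mono, rule sum_mono)
    fix i j assume "i \<in> {..<n}" "j \<in> {..<n}" hence i: "i < n" and j: "j < n" by auto
    have "p i * ln (x j) \<le> p i * ln (p i) + x j - p i" by (rule gibbs_pt[OF p0[OF i]], insert xpos[OF j] tnp, linarith)
    thus "p i * ln (x j) * M i j \<le> (p i * ln (p i) + x j - p i) * M i j" by (rule mult_right_mono[OF _ M0[OF i j]])
  qed
  also have "\<dots> = (\<Sum>i<n. p i * ln (p i) * (\<Sum>j<n. M i j)) + (\<Sum>j<n. x j * (\<Sum>i<n. M i j)) - (\<Sum>i<n. p i * (\<Sum>j<n. M i j))"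
    by (simp add: algebra_simps sum.distrib sum_subtractf sum_distrib_left sum.swap[of "\<lambda>i j. x j * M i j"])
  also have "\<dots> = (\<Sum>i<n. p i * ln (p i)) + (\<Sum>j<n. x j) - (\<Sum>i<n. p i)"
    using Mr Mc by simp
  also have "\<dots> = (\<Sum>i<n. p i * ln (p i))" using xsum p1 by simp
  finally have G: "(\<Sum>i<n. \<Sum>j<n. p i * ln (x j) * M i j) \<le> (\<Sum>i<n. p i * ln (p i))" .
  have Q: "(\<Sum>j<n. q j * ln (x j)) \<ge> (\<Sum>j<n. q j * ln (q j)) + ln (1 - \<tau>)"
  proof -
    have "(\<Sum>j<n. q j * ln (x j)) \<ge> (\<Sum>j<n. q j * ln (1 - \<tau>) + q j * ln (q j))"
    proof (rule sum_mono)
      fix j assume "j \<in> {..<n}" hence j: "j < n" by simp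
      show "q j * ln (1 - \<tau>) + q j * ln (q j) \<le> q j * ln (x j)"
      proof (cases "q j = 0")
        case True thus ?thesis by simp
      next
        case False
        hence qp: "q j > 0" using q0[OF j] by simp
        have "(1 - \<tau>) * q j \<le> x j" unfolding x_def using tnp by simp
        moreover have "(1 - \<tau>) * q j > 0" using qp tau by simp
        ultimately have "ln ((1 - \<tau>) * q j) \<le> ln (x j)" by simp
        hence "ln (1 - \<tau>) + ln (q j) \<le> ln (x j)" using qp tau by (simp add: ln_mult)
        hence "q j * (ln (1 - \<tau>) + ln (q j)) \<le> q j * ln (x j)" by (rule mult_left_mono, insert qp, simp)
        thus ?thesis by (simp add: algebra_simps)
      qed
    qed
    also have "(\<Sum>j<n. q j * ln (1 - \<tau>) + q j * ln (q j)) = (\<Sum>j<n. q j * ln (q j)) + ln (1 - \<tau>)"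
      using q1 by (simp add: sum.distrib sum_distrib_right[symmetric])
    finally show ?thesis .
  qed
  define L where "L = ln (n / \<tau>)"
  have L0: "L \<ge> 0" unfolding L_def using tau nr by simp
  have lnx: "- L \<le> ln (x j) \<and> ln (x j) \<le> 0" if j: "j < n" for j
  proof -
    have "ln (\<tau> / n) \<le> ln (x j)" using xpos[OF j] tnp by simp
    moreover have "ln (\<tau> / n) = - L" unfolding L_def using tau n by (simp add: ln_div)
    moreover have "ln (x j) \<le> 0" using xle1[OF j] xpos[OF j] tnp by simp
    ultimately show ?thesis by simp
  qed
  have D: "(\<Sum>k<n. \<Sum>j<n. \<delta> k * ln (x j) * K k j) \<ge> - (\<epsilon> / 2) * L"
  proof -
    have "(\<Sum>k<n. \<Sum>j<n. \<delta> k * ln (x j) * K k j) \<ge> (\<Sum>k<n. \<Sum>j<n. (- (max (\<delta> k) 0 * L)) * K k j)"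
    proof (rule sum_mono, rule sum_mono)
      fix k j assume "k \<in> {..<n}" "j \<in> {..<n}" hence k: "k < n" and j: "j < n" by auto
      have "- (max (\<delta> k) 0 * L) \<le> \<delta> k * ln (x j)"
      proof (cases "\<delta> k \<ge> 0")
        case True
        have "\<delta> k * (- L) \<le> \<delta> k * ln (x j)" by (rule mult_left_mono, insert lnx[OF j] True, auto)
        thus ?thesis using True by simp
      next
        case False
        have "0 \<le> \<delta> k * ln (x j)" using False lnx[OF j] by (simp add: mult_nonpos_nonpos)
        thus ?thesis using False by simp
      qed
      thus "(- (max (\<delta> k) 0 * L)) * K k j \<le> \<delta> k * ln (x j) * K k j" by (rule mult_right_mono[OF _ K0[OF k j]])
    qed
    also have "(\<Sum>k<n. \<Sum>j<n. (- (max (\<delta> k) 0 * L)) * K k j) = - L * (\<Sum>k<n. max (\<delta> k) 0)"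
    proof -
      have "(\<Sum>k<n. \<Sum>j<n. (- (max (\<delta> k) 0 * L)) * K k j) = (\<Sum>k<n. (- (max (\<delta> k) 0 * L)) * (\<Sum>j<n. K k j))"
        by (simp add: sum_distrib_left)
      also have "\<dots> = (\<Sum>k<n. - L * max (\<delta> k) 0)" by (rule sum.cong[OF refl], simp add: Kr)
      finally show ?thesis by (simp add: sum_distrib_left)
    qed
    finally have D1: "(\<Sum>k<n. \<Sum>j<n. \<delta> k * ln (x j) * K k j) \<ge> - L * (\<Sum>k<n. max (\<delta> k) 0)" .
    have "(\<Sum>k<n. max (\<delta> k) 0) = (\<Sum>k<n. (\<bar>\<delta> k\<bar> + \<delta> k) / 2)" by (rule sum.cong[OF refl], simp add: max_def)
    also have "\<dots> = ((\<Sum>k<n. \<bar>\<delta> k\<bar>) + (\<Sum>k<n. \<delta> k)) / 2" by (simp add: sum.distrib sum_divide_distrib[symmetric])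
    also have "\<dots> \<le> \<epsilon> / 2" using dE d0 by simp
    finally have "(\<Sum>k<n. max (\<delta> k) 0) \<le> \<epsilon> / 2" .
    hence "L * (\<Sum>k<n. max (\<delta> k) 0) \<le> L * (\<epsilon> / 2)" by (rule mult_left_mono[OF _ L0])
    moreover have "- (\<epsilon> / 2) * L = - (L * (\<epsilon> / 2))" "- L * (\<Sum>k<n. max (\<delta> k) 0) = - (L * (\<Sum>k<n. max (\<delta> k) 0))" by simp_all
    ultimately show ?thesis using D1 by linarith
  qed
  show ?thesis using G Q D ident unfolding L_def by linarith
qed

lemma Re_trace_hm_hm: assumes U: "U \<in> carrier_mat n n" and V: "V \<in> carrier_mat n n"
  shows "Re (mtrace (hm n U a * hm n V b)) = (\<Sum>i<n. \<Sum>j<n. a i * b j * (cmod ((mat_adjoint U * V) $$ (i,j)))^2)"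
  unfolding trace_hm_hm[OF U V] by simp

lemma Re_trace_same: assumes U: "unitary_mat n U"
  shows "Re (mtrace (hm n U a * hm n U b)) = (\<Sum>i<n. a i * b i)"
  unfolding hm_mult_same[OF U] trace_hm[OF U] by simp

lemma unitary_sq_rows: assumes N: "unitary_mat n N" and i: "i < n"
  shows "(\<Sum>j<n. (cmod (N $$ (i,j)))^2) = 1" "(\<Sum>j<n. (cmod (N $$ (j,i)))^2) = 1"
  using unitary_row_norm[OF N i] unitary_col_norm[OF N i] by auto

lemma trace_minus_mult: assumes A: "A \<in> carrier_mat n n" and B: "B \<in> carrier_mat n n" and C: "C \<in> carrier_mat n n"
  shows "mtrace ((A - B) * C) = mtrace (A * C) - mtrace (B * C)"
  unfolding minus_mult_distrib_mat[OF A B C] by (rule mtrace_minus[of _ n], insert A B C, simp_all)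

lemma entropy_matrix:
  assumes n: "n > 0" and U: "unitary_mat n U" and V: "unitary_mat n V" and W: "unitary_mat n W"
    and p0: "\<And>i. i < n \<Longrightarrow> p i \<ge> 0" and q0: "\<And>i. i < n \<Longrightarrow> q i \<ge> 0"
    and p1: "(\<Sum>i<n. p i) = 1" and q1: "(\<Sum>i<n. q i) = 1"
    and diff: "hm n U p - hm n V q = hm n W \<delta>" and dE: "(\<Sum>k<n. \<bar>\<delta> k\<bar>) \<le> \<epsilon>"
    and tau: "0 < \<tau>" "\<tau> < 1"
  shows "Re (mtrace (hm n U p * hm n U (\<lambda>i. ln (p i)))) \<ge>
         Re (mtrace (hm n V q * hm n V (\<lambda>i. ln (q i)))) + ln (1 - \<tau>) - \<epsilon> / 2 * ln (n / \<tau>)"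
proof -
  have CU: "U \<in> carrier_mat n n" and CV: "V \<in> carrier_mat n n" and CW: "W \<in> carrier_mat n n" using U V W by auto
  define x where "x = (\<lambda>j. (1 - \<tau>) * q j + \<tau> / n)"
  define Y where "Y = hm n V (\<lambda>j. ln (x j))"
  have CY: "Y \<in> carrier_mat n n" unfolding Y_def using CV by simp
  define M where "M = (\<lambda>i j. (cmod ((mat_adjoint U * V) $$ (i,j)))^2)"
  define K where "K = (\<lambda>i j. (cmod ((mat_adjoint W * V) $$ (i,j)))^2)"
  have NM: "unitary_mat n (mat_adjoint U * V)" by (rule unitary_mult[OF unitary_adj[OF U] V])
  have NK: "unitary_mat n (mat_adjoint W * V)" by (rule unitary_mult[OF unitary_adj[OF W] V])
  have "mtrace ((hm n U p - hm n V q) * Y) = mtrace (hm n U p * Y) - mtrace (hm n V q * Y)"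
    by (rule trace_minus_mult, insert CU CV CY, simp_all)
  hence "Re (mtrace (hm n W \<delta> * Y)) = Re (mtrace (hm n U p * Y)) - Re (mtrace (hm n V q * Y))"
    unfolding diff by simp
  hence ident: "(\<Sum>i<n. \<Sum>j<n. p i * ln (x j) * M i j) =
                (\<Sum>j<n. q j * ln (x j)) + (\<Sum>k<n. \<Sum>j<n. \<delta> k * ln (x j) * K k j)"
    unfolding Y_def Re_trace_hm_hm[OF CU CV] Re_trace_hm_hm[OF CW CV] Re_trace_same[OF V] M_def K_def
    by simp
  have "mtrace (hm n U p - hm n V q) = mtrace (hm n U p) - mtrace (hm n V q)"
    by (rule mtrace_minus[of _ n], insert CU CV, simp_all)
  hence "complex_of_real (\<Sum>k<n. \<delta> k) = 0" unfolding diff trace_hm[OF U] trace_hm[OF V] trace_hm[OF W] p1 q1 by simp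
  hence d0: "(\<Sum>k<n. \<delta> k) = 0" by (simp only: of_real_eq_0_iff)
  have "(\<Sum>i<n. p i * ln (p i)) \<ge> (\<Sum>i<n. q i * ln (q i)) + ln (1 - \<tau>) - \<epsilon> / 2 * ln (n / \<tau>)"
    by (rule entropy_classical[OF n p0 q0 p1 q1 _ _ _ _ _ d0 dE tau x_def ident],
        auto simp: M_def K_def unitary_sq_rows[OF NM] unitary_sq_rows[OF NK])
  thus ?thesis unfolding Re_trace_same[OF U] Re_trace_same[OF V] .
qed

lemma cross1:
  assumes W: "unitary_mat n W" and Us: "unitary_mat n Us" and dE: "(\<Sum>k<n. \<bar>\<delta> k\<bar>) \<le> \<epsilon>"
    and s: "\<And>j. j < n \<Longrightarrow> lam \<le> s j \<and> s j \<le> 1" and lam: "lam > 0" and lam1: "lam \<le> 1"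
  shows "\<bar>Re (mtrace (hm n W \<delta> * hm n Us (\<lambda>j. ln (s j))))\<bar> \<le> \<epsilon> * ln (1 / lam)"
proof -
  have CW: "W \<in> carrier_mat n n" and CU: "Us \<in> carrier_mat n n" using W Us by auto
  define K where "K = (\<lambda>i j. (cmod ((mat_adjoint W * Us) $$ (i,j)))^2)"
  have NK: "unitary_mat n (mat_adjoint W * Us)" by (rule unitary_mult[OF unitary_adj[OF W] Us])
  have Kr: "(\<Sum>j<n. K k j) = 1" if "k < n" for k unfolding K_def by (rule unitary_sq_rows(1)[OF NK that])
  define L where "L = ln (1 / lam)"
  have lnb: "\<bar>ln (s j)\<bar> \<le> L" if j: "j < n" for j
  proof -
    have sp: "s j > 0" using s[OF j] lam by linarith
    have "ln lam \<le> ln (s j)" using s[OF j] lam by simp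
    moreover have "ln (s j) \<le> 0" using s[OF j] sp by simp
    moreover have "L = - ln lam" unfolding L_def using lam by (simp add: ln_div)
    ultimately show ?thesis by linarith
  qed
  have "\<bar>Re (mtrace (hm n W \<delta> * hm n Us (\<lambda>j. ln (s j))))\<bar> = \<bar>\<Sum>k<n. \<Sum>j<n. \<delta> k * ln (s j) * K k j\<bar>"
    unfolding Re_trace_hm_hm[OF CW CU] K_def ..
  also have "\<dots> \<le> (\<Sum>k<n. \<Sum>j<n. \<bar>\<delta> k * ln (s j) * K k j\<bar>)"
    by (rule order_trans[OF sum_abs sum_mono], rule sum_abs)
  also have "\<dots> \<le> (\<Sum>k<n. \<Sum>j<n. \<bar>\<delta> k\<bar> * L * K k j)"
  proof (rule sum_mono, rule sum_mono)
    fix k j assume "k \<in> {..<n}" "j \<in> {..<n}" hence k: "k < n" and j: "j < n" by auto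
    have K0: "K k j \<ge> 0" unfolding K_def by simp
    have "\<bar>\<delta> k * ln (s j) * K k j\<bar> = \<bar>\<delta> k\<bar> * \<bar>ln (s j)\<bar> * K k j" using K0 by (simp add: abs_mult)
    also have "\<dots> \<le> \<bar>\<delta> k\<bar> * L * K k j" by (intro mult_right_mono mult_left_mono lnb[OF j] K0) simp
    finally show "\<bar>\<delta> k * ln (s j) * K k j\<bar> \<le> \<bar>\<delta> k\<bar> * L * K k j" .
  qed
  also have "\<dots> = (\<Sum>k<n. \<bar>\<delta> k\<bar> * L * (\<Sum>j<n. K k j))" by (simp add: sum_distrib_left)
  also have "\<dots> = (\<Sum>k<n. \<bar>\<delta> k\<bar>) * L" by (simp add: Kr sum_distrib_right)
  also have "\<dots> \<le> \<epsilon> * L"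
  proof (rule mult_right_mono[OF dE])
    show "0 \<le> L" unfolding L_def using lam lam1 by simp
  qed
  finally show ?thesis unfolding L_def .
qed

lemma conj_minus: assumes P: "(P :: complex mat) \<in> carrier_mat m n" and X: "X \<in> carrier_mat n n" and Y: "Y \<in> carrier_mat n n"
  and Q: "Q \<in> carrier_mat n k"
  shows "P * (X - Y) * Q = P * X * Q - P * Y * Q"
proof -
  have "P * (X - Y) = P * X - P * Y" by (rule mult_minus_distrib_mat[OF P X Y])
  thus ?thesis using minus_mult_distrib_mat[OF mult_carrier_mat[OF P X] mult_carrier_mat[OF P Y] Q] by simp
qed

lemma gen_conj: assumes P: "P \<in> carrier_mat n n" and B: "B \<in> carrier_mat n n" and Q: "Q \<in> carrier_mat n n"
  shows "P * hm n B a * mat_adjoint Q = (P * B) * rdiag n a * mat_adjoint (Q * B)"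
  unfolding hm_def adj_mult[OF Q B] using P B Q
  by (simp add: assoc_mult_mat[of _ n n _ n _ n])

lemma weyl:
  assumes Us: "unitary_mat n Us" and Vs: "unitary_mat n Vs" and Ws: "unitary_mat n Ws"
    and diff: "hm n Us s - hm n Vs t = hm n Ws \<gamma>" and gE: "(\<Sum>k<n. \<bar>\<gamma> k\<bar>) \<le> \<epsilon>"
    and s: "\<And>j. j < n \<Longrightarrow> lam \<le> s j" and j: "j < n"
  shows "t j \<ge> lam - \<epsilon>"
proof -
  have CU: "Us \<in> carrier_mat n n" and CV: "Vs \<in> carrier_mat n n" and CW: "Ws \<in> carrier_mat n n" using Us Vs Ws by auto
  have CV': "mat_adjoint Vs \<in> carrier_mat n n" using CV by simp
  have e: "hm n Vs t = hm n Us s - hm n Ws \<gamma>"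
  proof (rule eq_matI)
    fix a b assume "a < dim_row (hm n Us s - hm n Ws \<gamma>)" "b < dim_col (hm n Us s - hm n Ws \<gamma>)"
    hence a: "a < n" and b: "b < n" using CW by simp_all
    have "(hm n Us s - hm n Vs t) $$ (a,b) = hm n Ws \<gamma> $$ (a,b)" using diff by simp
    thus "hm n Vs t $$ (a,b) = (hm n Us s - hm n Ws \<gamma>) $$ (a,b)" using a b CU CV CW by (simp add: diff_eq_eq eq_diff_eq add.commute)
  qed (use CV CW in simp_all)
  have "mat_adjoint Vs * hm n Vs t * mat_adjoint (mat_adjoint Vs) = hm n (mat_adjoint Vs * Vs) t"
    by (rule hm_conj[OF CV' CV])
  also have "mat_adjoint Vs * Vs = 1\<^sub>m n" using Vs unfolding unitary_mat_def by simp
  finally have 1: "mat_adjoint Vs * hm n Vs t * Vs = hm n (1\<^sub>m n) t" by simp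
  have 2: "mat_adjoint Vs * (hm n Us s - hm n Ws \<gamma>) * Vs =
        hm n (mat_adjoint Vs * Us) s - hm n (mat_adjoint Vs * Ws) \<gamma>"
    unfolding conj_minus[OF CV' hm_carrier[OF CU] hm_carrier[OF CW] CV]
    using hm_conj[OF CV' CU, of s] hm_conj[OF CV' CW, of \<gamma>] by simp
  have NU: "unitary_mat n (mat_adjoint Vs * Us)" by (rule unitary_mult[OF unitary_adj[OF Vs] Us])
  have NW: "unitary_mat n (mat_adjoint Vs * Ws)" by (rule unitary_mult[OF unitary_adj[OF Vs] Ws])
  have C1: "(1\<^sub>m n :: complex mat) \<in> carrier_mat n n" by simp
  have "hm n (1\<^sub>m n) t $$ (j,j) = complex_of_real (t j)"
    unfolding hm_index[OF C1 j j] using j by (simp add: sum.delta'[of "{..<n}" j] if_distrib cong: if_cong)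
  moreover have "hm n (1\<^sub>m n) t = hm n (mat_adjoint Vs * Us) s - hm n (mat_adjoint Vs * Ws) \<gamma>"
    using 1 2 e by simp
  moreover have "(hm n (mat_adjoint Vs * Us) s - hm n (mat_adjoint Vs * Ws) \<gamma>) $$ (j,j) =
     hm n (mat_adjoint Vs * Us) s $$ (j,j) - hm n (mat_adjoint Vs * Ws) \<gamma> $$ (j,j)"
    by (rule index_minus_mat, insert NW j, simp_all)
  ultimately have "complex_of_real (t j) = hm n (mat_adjoint Vs * Us) s $$ (j,j) - hm n (mat_adjoint Vs * Ws) \<gamma> $$ (j,j)"
    by simp
  hence tj: "t j = Re (hm n (mat_adjoint Vs * Us) s $$ (j,j)) - Re (hm n (mat_adjoint Vs * Ws) \<gamma> $$ (j,j))"
    by (metis Re_complex_of_real minus_complex.sel(1))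
  have a: "Re (hm n (mat_adjoint Vs * Us) s $$ (j,j)) \<ge> lam"
  proof -
    let ?N = "mat_adjoint Vs * Us"
    have CN: "?N \<in> carrier_mat n n" using NU by simp
    have "hm n ?N s $$ (j,j) = (\<Sum>k<n. complex_of_real (s k * (cmod (?N $$ (j,k)))^2))"
      unfolding hm_index[OF CN j j]
      by (rule sum.cong[OF refl], simp only: of_real_mult complex_norm_square, simp only: mult.commute mult.left_commute)
    hence "Re (hm n ?N s $$ (j,j)) = (\<Sum>k<n. s k * (cmod (?N $$ (j,k)))^2)" by (simp only: Re_sum Re_complex_of_real)
    also have "\<dots> \<ge> (\<Sum>k<n. lam * (cmod (?N $$ (j,k)))^2)"
      by (rule sum_mono, rule mult_right_mono, insert s, auto)
    also have "(\<Sum>k<n. lam * (cmod (?N $$ (j,k)))^2) = lam" 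
      unfolding sum_distrib_left[symmetric] unitary_sq_rows(1)[OF NU j] by simp
    finally show ?thesis .
  qed
  have b: "Re (hm n (mat_adjoint Vs * Ws) \<gamma> $$ (j,j)) \<le> \<epsilon>"
  proof -
    have "Re (hm n (mat_adjoint Vs * Ws) \<gamma> $$ (j,j)) \<le> cmod (hm n (mat_adjoint Vs * Ws) \<gamma> $$ (j,j))"
      by (rule complex_Re_le_cmod)
    also have "\<dots> \<le> (\<Sum>k<n. \<bar>\<gamma> k\<bar>)" unfolding hm_def by (rule cf_bound[OF NW NW j j])
    finally show ?thesis using gE by simp
  qed
  show ?thesis using tj a b by simp
qed

lemma ln_lip: assumes m: "m > (0::real)" and a: "a \<ge> m" and b: "b \<ge> m"
  shows "\<bar>ln a - ln b\<bar> \<le> \<bar>a - b\<bar> / m"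
proof -
  have key: "ln x - ln y \<le> (x - y) / m" if x: "(x::real) \<ge> y" and y: "y \<ge> m" for x y
  proof -
    have yp: "y > 0" using y m by simp
    have "ln (x / y) \<le> x / y - 1" by (rule ln_le_minus_one, insert x yp, simp)
    hence "ln x - ln y \<le> (x - y) / y" using x yp by (simp add: ln_div diff_divide_distrib)
    also have "(x - y) / y \<le> (x - y) / m" using x y m by (simp add: frac_le)
    finally show ?thesis .
  qed
  show ?thesis
  proof (cases "a \<ge> b")
    case True
    have "ln b \<le> ln a" using True b m by simp
    thus ?thesis using key[OF True b] True by simp
  next
    case False
    hence ba: "b \<ge> a" by simp
    have "ln a \<le> ln b" using ba a m by simp
    thus ?thesis using key[OF ba a] ba by simp
  qed
qed

lemma cmod_of_real_diff[simp]: "cmod (complex_of_real a - complex_of_real b) = \<bar>a - b\<bar>"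
  by (metis norm_of_real of_real_diff)

lemma cross2:
  assumes V: "unitary_mat n V" and Us: "unitary_mat n Us" and Vs: "unitary_mat n Vs" and Ws: "unitary_mat n Ws"
    and q0: "\<And>i. i < n \<Longrightarrow> q i \<ge> 0" and q1: "(\<Sum>i<n. q i) = 1"
    and diff: "hm n Us s - hm n Vs t = hm n Ws \<gamma>" and gE: "(\<Sum>k<n. \<bar>\<gamma> k\<bar>) \<le> \<epsilon>"
    and m: "m > 0" and sm: "\<And>i. i < n \<Longrightarrow> s i \<ge> m" and tm: "\<And>i. i < n \<Longrightarrow> t i \<ge> m"
  shows "\<bar>Re (mtrace (hm n V q * hm n Us (\<lambda>i. ln (s i)))) - Re (mtrace (hm n V q * hm n Vs (\<lambda>i. ln (t i))))\<bar>
         \<le> (real n)^2 * (\<epsilon> / m)"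
proof -
  have CV: "V \<in> carrier_mat n n" and CU: "Us \<in> carrier_mat n n" and CVs: "Vs \<in> carrier_mat n n"
    and CW: "Ws \<in> carrier_mat n n" using V Us Vs Ws by auto
  have CU': "mat_adjoint Us \<in> carrier_mat n n" and CVs': "mat_adjoint Vs \<in> carrier_mat n n" using CU CVs by auto
  define A where "A = mat_adjoint Us * V"
  define B where "B = mat_adjoint Vs * V"
  define N where "N = mat_adjoint Us * Vs"
  define ls where "ls = (\<lambda>i. ln (s i))"
  define lt where "lt = (\<lambda>i. ln (t i))"
  have UA: "unitary_mat n A" unfolding A_def by (rule unitary_mult[OF unitary_adj[OF Us] V])
  have UB: "unitary_mat n B" unfolding B_def by (rule unitary_mult[OF unitary_adj[OF Vs] V])
  have UN: "unitary_mat n N" unfolding N_def by (rule unitary_mult[OF unitary_adj[OF Us] Vs])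
  have CA: "A \<in> carrier_mat n n" and CB: "B \<in> carrier_mat n n" and CN: "N \<in> carrier_mat n n" using UA UB UN by auto
  have ANB: "A = N * B"
  proof -
    have "N * B = mat_adjoint Us * (Vs * (mat_adjoint Vs * V))"
      unfolding N_def B_def using CU' CVs CVs' CV by (simp add: assoc_mult_mat[of _ n n _ n _ n])
    also have "Vs * (mat_adjoint Vs * V) = V" by (rule unitary_lcancel(1)[OF Vs CV])
    finally show ?thesis unfolding A_def by simp
  qed
  have aN: "mat_adjoint N = mat_adjoint Vs * Us" unfolding N_def adj_mult[OF CU' CVs] by simp
  have BNA: "B = mat_adjoint N * A"
  proof -
    have "mat_adjoint N * A = mat_adjoint Vs * (Us * (mat_adjoint Us * V))"
      unfolding aN A_def using CU' CU CVs' CV by (simp add: assoc_mult_mat[of _ n n _ n _ n])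
    also have "Us * (mat_adjoint Us * V) = V" by (rule unitary_lcancel(1)[OF Us CV])
    finally show ?thesis unfolding B_def by simp
  qed
  have eps0: "\<epsilon> \<ge> 0" using gE order_trans[OF sum_nonneg] by (metis abs_ge_zero)
  have T1: "Re (mtrace (hm n V q * hm n Us ls)) = (\<Sum>i<n. \<Sum>k<n. ls i * q k * (cmod (A $$ (i,k)))^2)"
    using mtrace_mult_comm[OF hm_carrier[OF CV] hm_carrier[OF CU], of q ls]
    unfolding A_def by (simp add: Re_trace_hm_hm[OF CU CV])
  have T2: "Re (mtrace (hm n V q * hm n Vs lt)) = (\<Sum>j<n. \<Sum>k<n. lt j * q k * (cmod (B $$ (j,k)))^2)"
    using mtrace_mult_comm[OF hm_carrier[OF CV] hm_carrier[OF CVs], of q lt]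
    unfolding B_def by (simp add: Re_trace_hm_hm[OF CVs CV])
  define D where "D = (\<lambda>k. (\<Sum>i<n. ls i * (cmod (A $$ (i,k)))^2) - (\<Sum>j<n. lt j * (cmod (B $$ (j,k)))^2))"
  have Tdiff: "Re (mtrace (hm n V q * hm n Us ls)) - Re (mtrace (hm n V q * hm n Vs lt)) = (\<Sum>k<n. q k * D k)"
  proof -
    have a: "(\<Sum>i<n. \<Sum>k<n. ls i * q k * (cmod (A $$ (i,k)))^2) = (\<Sum>k<n. q k * (\<Sum>i<n. ls i * (cmod (A $$ (i,k)))^2))"
      by (subst sum.swap, rule sum.cong[OF refl], subst sum_distrib_left, rule sum.cong[OF refl], simp add: algebra_simps)
    have b: "(\<Sum>j<n. \<Sum>k<n. lt j * q k * (cmod (B $$ (j,k)))^2) = (\<Sum>k<n. q k * (\<Sum>j<n. lt j * (cmod (B $$ (j,k)))^2))"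
      by (subst sum.swap, rule sum.cong[OF refl], subst sum_distrib_left, rule sum.cong[OF refl], simp add: algebra_simps)
    show ?thesis unfolding T1 T2 a b D_def by (simp only: right_diff_distrib sum_subtractf)
  qed
  have E: "mat_adjoint Us * hm n Ws \<gamma> * Vs = (mat_adjoint Us * Ws) * rdiag n \<gamma> * mat_adjoint (mat_adjoint Vs * Ws)"
    using gen_conj[OF CU' CW CVs', of \<gamma>] by simp
  have E1: "mat_adjoint Us * hm n Us s * Vs = rdiag n s * N"
  proof -
    have "mat_adjoint Us * hm n Us s * Vs = (mat_adjoint Us * Us) * rdiag n s * mat_adjoint (mat_adjoint Vs * Us)"
      using gen_conj[OF CU' CU CVs', of s] by simp
    also have "mat_adjoint Us * Us = 1\<^sub>m n" using Us unfolding unitary_mat_def by simp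
    also have "mat_adjoint (mat_adjoint Vs * Us) = N" unfolding N_def adj_mult[OF CVs' CU] by simp
    finally show ?thesis by simp
  qed
  have E2: "mat_adjoint Us * hm n Vs t * Vs = N * rdiag n t"
  proof -
    have "mat_adjoint Us * hm n Vs t * Vs = (mat_adjoint Us * Vs) * rdiag n t * mat_adjoint (mat_adjoint Vs * Vs)"
      using gen_conj[OF CU' CVs CVs', of t] by simp
    also have "mat_adjoint Vs * Vs = 1\<^sub>m n" using Vs unfolding unitary_mat_def by simp
    finally show ?thesis unfolding N_def using CU' CVs by (simp add: right_mult_one_mat[of _ n n])
  qed
  have ED: "rdiag n s * N - N * rdiag n t = (mat_adjoint Us * Ws) * rdiag n \<gamma> * mat_adjoint (mat_adjoint Vs * Ws)"
    using conj_minus[OF CU' hm_carrier[OF CU] hm_carrier[OF CVs] CVs, of s t] E1 E2 E diff by simp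
  have Nb: "cmod (N $$ (i,j)) * \<bar>s i - t j\<bar> \<le> \<epsilon>" if i: "i < n" and j: "j < n" for i j
  proof -
    have "(rdiag n s * N - N * rdiag n t) $$ (i,j) = (rdiag n s * N) $$ (i,j) - (N * rdiag n t) $$ (i,j)"
      by (rule index_minus_mat, insert CN i j, simp_all)
    also have "\<dots> = N $$ (i,j) * complex_of_real (s i - t j)"
      unfolding rdiag_mult_left[OF CN i j] rdiag_mult_right[OF CN i j] by (simp add: algebra_simps)
    finally have "cmod (N $$ (i,j) * complex_of_real (s i - t j)) = cmod (((mat_adjoint Us * Ws) * rdiag n \<gamma> * mat_adjoint (mat_adjoint Vs * Ws)) $$ (i,j))"
      unfolding ED by simp
    also have "\<dots> \<le> (\<Sum>k<n. \<bar>\<gamma> k\<bar>)"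
      by (rule cf_bound[OF unitary_mult[OF unitary_adj[OF Us] Ws] unitary_mult[OF unitary_adj[OF Vs] Ws] i j])
    finally show ?thesis using gE by (simp add: norm_mult)
  qed
  have Nl: "cmod (N $$ (i,j)) * \<bar>ls i - lt j\<bar> \<le> \<epsilon> / m" if i: "i < n" and j: "j < n" for i j
  proof -
    have "\<bar>ls i - lt j\<bar> \<le> \<bar>s i - t j\<bar> / m" unfolding ls_def lt_def by (rule ln_lip[OF m sm[OF i] tm[OF j]])
    hence "cmod (N $$ (i,j)) * \<bar>ls i - lt j\<bar> \<le> cmod (N $$ (i,j)) * (\<bar>s i - t j\<bar> / m)"
      by (rule mult_left_mono, simp)
    also have "\<dots> = (cmod (N $$ (i,j)) * \<bar>s i - t j\<bar>) / m" by simp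
    also have "\<dots> \<le> \<epsilon> / m" by (rule divide_right_mono[OF Nb[OF i j]], insert m, simp)
    finally show ?thesis .
  qed
  have Dk: "\<bar>D k\<bar> \<le> (real n)^2 * (\<epsilon> / m)" if k: "k < n" for k
  proof -
    define Z where "Z = (\<Sum>i<n. \<Sum>j<n. cnj (A $$ (i,k)) * N $$ (i,j) * complex_of_real (ls i - lt j) * B $$ (j,k))"
    have Z1: "(\<Sum>i<n. \<Sum>j<n. cnj (A $$ (i,k)) * N $$ (i,j) * complex_of_real (ls i) * B $$ (j,k))
        = (\<Sum>i<n. complex_of_real (ls i * (cmod (A $$ (i,k)))^2))"
    proof (rule sum.cong[OF refl])
      fix i assume "i \<in> {..<n}" hence i: "i < n" by simp
      have "(\<Sum>j<n. cnj (A $$ (i,k)) * N $$ (i,j) * complex_of_real (ls i) * B $$ (j,k))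
          = cnj (A $$ (i,k)) * complex_of_real (ls i) * (\<Sum>j<n. N $$ (i,j) * B $$ (j,k))"
        by (simp add: sum_distrib_left mult.commute mult.left_commute)
      also have "(\<Sum>j<n. N $$ (i,j) * B $$ (j,k)) = A $$ (i,k)" unfolding ANB by (rule mult_index[OF CN CB i k, symmetric])
      finally show "(\<Sum>j<n. cnj (A $$ (i,k)) * N $$ (i,j) * complex_of_real (ls i) * B $$ (j,k))
          = complex_of_real (ls i * (cmod (A $$ (i,k)))^2)"
        by (simp only: of_real_mult complex_norm_square, simp only: mult.commute mult.left_commute)
    qed
    have Z2: "(\<Sum>i<n. \<Sum>j<n. cnj (A $$ (i,k)) * N $$ (i,j) * complex_of_real (lt j) * B $$ (j,k))
        = (\<Sum>j<n. complex_of_real (lt j * (cmod (B $$ (j,k)))^2))"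
    proof -
      have "(\<Sum>i<n. \<Sum>j<n. cnj (A $$ (i,k)) * N $$ (i,j) * complex_of_real (lt j) * B $$ (j,k))
          = (\<Sum>j<n. \<Sum>i<n. cnj (A $$ (i,k)) * N $$ (i,j) * complex_of_real (lt j) * B $$ (j,k))"
        by (rule sum.swap)
      also have "\<dots> = (\<Sum>j<n. complex_of_real (lt j * (cmod (B $$ (j,k)))^2))"
      proof (rule sum.cong[OF refl])
        fix j assume "j \<in> {..<n}" hence j: "j < n" by simp
        have "(\<Sum>i<n. cnj (A $$ (i,k)) * N $$ (i,j) * complex_of_real (lt j) * B $$ (j,k))
          = complex_of_real (lt j) * B $$ (j,k) * cnj (\<Sum>i<n. mat_adjoint N $$ (j,i) * A $$ (i,k))"
          using CN j by (simp add: sum_distrib_left cnj_sum mult.commute mult.left_commute)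
        also have "(\<Sum>i<n. mat_adjoint N $$ (j,i) * A $$ (i,k)) = B $$ (j,k)"
          unfolding BNA by (rule mult_index[OF _ CA j k, symmetric], insert CN, simp)
        finally show "(\<Sum>i<n. cnj (A $$ (i,k)) * N $$ (i,j) * complex_of_real (lt j) * B $$ (j,k))
          = complex_of_real (lt j * (cmod (B $$ (j,k)))^2)"
          by (simp only: of_real_mult complex_norm_square, simp only: mult.commute mult.left_commute)
      qed
      finally show ?thesis .
    qed
    have "Z = (\<Sum>i<n. \<Sum>j<n. cnj (A $$ (i,k)) * N $$ (i,j) * complex_of_real (ls i) * B $$ (j,k))
            - (\<Sum>i<n. \<Sum>j<n. cnj (A $$ (i,k)) * N $$ (i,j) * complex_of_real (lt j) * B $$ (j,k))"
      unfolding Z_def by (simp add: sum_subtractf[symmetric] algebra_simps)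
    also have "\<dots> = complex_of_real (D k)" unfolding Z1 Z2 D_def by (simp add: of_real_sum)
    finally have ZD: "Z = complex_of_real (D k)" .
    have "cmod Z \<le> (\<Sum>i<n. \<Sum>j<n. cmod (cnj (A $$ (i,k)) * N $$ (i,j) * complex_of_real (ls i - lt j) * B $$ (j,k)))"
      unfolding Z_def by (rule order_trans[OF norm_sum sum_mono], rule norm_sum)
    also have "\<dots> \<le> (\<Sum>i<n. \<Sum>j<n. \<epsilon> / m)"
    proof (rule sum_mono, rule sum_mono)
      fix i j assume "i \<in> {..<n}" "j \<in> {..<n}" hence i: "i < n" and j: "j < n" by auto
      have "cmod (cnj (A $$ (i,k)) * N $$ (i,j) * complex_of_real (ls i - lt j) * B $$ (j,k))
          = cmod (A $$ (i,k)) * (cmod (N $$ (i,j)) * \<bar>ls i - lt j\<bar>) * cmod (B $$ (j,k))"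
        by (simp add: norm_mult)
      also have "\<dots> \<le> 1 * (\<epsilon> / m) * 1"
        by (intro mult_mono unitary_entry_le1[OF UA i k] unitary_entry_le1[OF UB j k] Nl[OF i j]) (auto simp: divide_nonneg_pos[OF eps0 m])
      finally show "cmod (cnj (A $$ (i,k)) * N $$ (i,j) * complex_of_real (ls i - lt j) * B $$ (j,k)) \<le> \<epsilon> / m"
        by simp
    qed
    also have "\<dots> = (real n)^2 * (\<epsilon> / m)" by (simp add: power2_eq_square)
    note this
    finally show ?thesis using ZD by simp
  qed
  have "\<bar>\<Sum>k<n. q k * D k\<bar> \<le> (\<Sum>k<n. q k * ((real n)^2 * (\<epsilon> / m)))"
  proof (rule order_trans[OF sum_abs sum_mono])
    fix k assume "k \<in> {..<n}" hence k: "k < n" by simp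
    have "\<bar>q k * D k\<bar> = q k * \<bar>D k\<bar>" using q0[OF k] by (simp add: abs_mult)
    also have "\<dots> \<le> q k * ((real n)^2 * (\<epsilon> / m))" by (rule mult_left_mono[OF Dk[OF k] q0[OF k]])
    finally show "\<bar>q k * D k\<bar> \<le> q k * ((real n)^2 * (\<epsilon> / m))" .
  qed
  also have "\<dots> = (real n)^2 * (\<epsilon> / m)" by (simp only: sum_distrib_right[symmetric] q1 mult_1_left)
  finally show ?thesis unfolding Tdiff[unfolded ls_def lt_def] .
qed

lemma final_arith:
  fixes d :: nat and \<epsilon> lam X Ed C1 C2 :: real
  assumes d: "d \<ge> 1" and e: "\<epsilon> > 0" and el: "\<epsilon> < lam" and dl: "real d * lam \<le> 1"
    and X: "X = Ed - C1 - C2"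
    and Ed: "\<bar>Ed\<bar> \<le> - ln (1 - \<epsilon>/2) + \<epsilon>/2 * ln (real d / (\<epsilon>/2))"
    and Ed1: "d = 1 \<Longrightarrow> Ed = 0"
    and C1: "\<bar>C1\<bar> \<le> \<epsilon> * ln (1 / lam)"
    and C2: "\<bar>C2\<bar> \<le> (real d)^2 * (\<epsilon> / (lam - \<epsilon>))"
  shows "\<bar>X\<bar> \<le> \<epsilon> * (ln (real d - 1) / 2 + real d * ln (1 / lam) + (real d)\<^sup>2 / (lam - \<epsilon>))
     + bin_entropy (\<epsilon> / 2)"
proof -
  define \<tau> where "\<tau> = \<epsilon> / 2"
  have lam0: "lam > 0" using e el by simp
  have dr: "real d \<ge> 1" using d by simp
  have "1 * lam \<le> real d * lam" by (rule mult_right_mono[OF dr], insert lam0, simp)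
  hence lam1: "lam \<le> 1" using dl by simp
  have t0: "\<tau> > 0" and t2: "\<tau> < 1/2" unfolding \<tau>_def using e el lam1 by simp_all
  have ln1t: "ln (1 - \<tau>) \<le> 0" using t0 t2 by simp
  have lnt: "ln \<tau> \<le> 0" using t0 t2 by simp
  have Hb: "bin_entropy \<tau> = - \<tau> * ln \<tau> - (1 - \<tau>) * ln (1 - \<tau>)" unfolding bin_entropy_def ..
  have Hb0: "bin_entropy \<tau> \<ge> 0"
  proof -
    have "\<tau> * ln \<tau> \<le> 0" by (rule mult_nonneg_nonpos, insert t0 lnt, simp_all)
    moreover have "(1 - \<tau>) * ln (1 - \<tau>) \<le> 0" by (rule mult_nonneg_nonpos, insert t2 ln1t, simp_all)
    moreover have "- \<tau> * ln \<tau> = - (\<tau> * ln \<tau>)" by simp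
    ultimately show ?thesis unfolding Hb by linarith
  qed
  have L0: "ln (1 / lam) \<ge> 0" using lam0 lam1 by simp
  have C2': "(real d)^2 * (\<epsilon> / (lam - \<epsilon>)) = \<epsilon> * ((real d)^2 / (lam - \<epsilon>))" by simp
  show ?thesis
  proof (cases "d = 1")
    case True
    have "\<bar>X\<bar> \<le> \<bar>C1\<bar> + \<bar>C2\<bar>" using X Ed1[OF True] by simp
    moreover have eqR: "\<epsilon> * (ln (real d - 1) / 2 + real d * ln (1 / lam) + (real d)\<^sup>2 / (lam - \<epsilon>)) = \<epsilon> * ln (1 / lam) + \<epsilon> * ((real d)^2 / (lam - \<epsilon>))"
      using True by (simp add: distrib_left)
    moreover have "bin_entropy (\<epsilon> / 2) \<ge> 0" using Hb0 unfolding \<tau>_def .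
    ultimately have "\<bar>X\<bar> \<le> \<epsilon> * ln (1 / lam) + \<epsilon> * ((real d)^2 / (lam - \<epsilon>)) + bin_entropy (\<epsilon> / 2)"
      using C1 C2 C2' by linarith
    thus ?thesis by (simp only: eqR)
  next
    case False
    hence d2: "real d \<ge> 2" using d by simp
    have lnd: "ln (real d / \<tau>) = ln (real d) - ln \<tau>" using t0 d2 by (simp add: ln_div)
    have a: "- ln (1 - \<tau>) \<le> ln 2"
    proof -
      have "ln (1/2) \<le> ln (1 - \<tau>)" using t0 t2 by simp
      thus ?thesis by (simp add: ln_div)
    qed
    have b: "ln (real d) - ln (real d - 1) \<le> ln 2"
    proof -
      have "ln (real d) \<le> ln (2 * (real d - 1))" using d2 by simp
      also have "\<dots> = ln 2 + ln (real d - 1)" using ln_mult[of 2 "real d - 1"] d2 by simp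
      finally show ?thesis by simp
    qed
    have c: "2 * ln 2 \<le> 2 * (real d - 1) * ln (1 / lam)"
    proof -
      have "real d \<le> 1 / lam" using dl lam0 by (simp add: field_simps)
      hence "2 \<le> 1 / lam" using d2 by linarith
      hence "ln 2 \<le> ln (1 / lam)" using lam0 by simp
      moreover have "1 \<le> real d - 1" using d2 by simp
      ultimately have "1 * ln 2 \<le> (real d - 1) * ln (1 / lam)" by (intro mult_mono) auto
      moreover have "2 * (real d - 1) * ln (1 / lam) = 2 * ((real d - 1) * ln (1 / lam))" by simp
      ultimately show ?thesis by linarith
    qed
    have key: "- ln (1 - \<tau>) + ln (real d) - ln (real d - 1) \<le> 2 * (real d - 1) * ln (1 / lam)"
      using a b c by simp
    have key2: "\<tau> * (- ln (1 - \<tau>) + ln (real d) - ln (real d - 1)) \<le> \<tau> * (2 * (real d - 1) * ln (1 / lam))"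
      by (rule mult_left_mono[OF key], insert t0, simp)
    have "\<bar>X\<bar> \<le> \<bar>Ed\<bar> + \<bar>C1\<bar> + \<bar>C2\<bar>" using X by simp
    also have "\<dots> \<le> (- ln (1 - \<tau>) + \<tau> * (ln (real d) - ln \<tau>)) + 2 * \<tau> * ln (1 / lam) + \<epsilon> * ((real d)^2 / (lam - \<epsilon>))"
    proof -
      have Ed': "\<bar>Ed\<bar> \<le> - ln (1 - \<tau>) + \<tau> * (ln (real d) - ln \<tau>)" using Ed by (simp only: \<tau>_def[symmetric] lnd)
      have "\<epsilon> = 2 * \<tau>" by (simp add: \<tau>_def)
      hence "\<epsilon> * ln (1 / lam) = 2 * \<tau> * ln (1 / lam)" by simp
      thus ?thesis using Ed' C1 C2 C2' by linarith
    qed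
    also have "\<dots> \<le> 2 * \<tau> * (ln (real d - 1) / 2 + real d * ln (1 / lam)) + \<epsilon> * ((real d)^2 / (lam - \<epsilon>)) + bin_entropy \<tau>"
    proof -
      have id: "(- ln (1 - \<tau>) + \<tau> * (ln (real d) - ln \<tau>)) + 2 * \<tau> * ln (1 / lam) + \<epsilon> * ((real d)^2 / (lam - \<epsilon>))
          - (2 * \<tau> * (ln (real d - 1) / 2 + real d * ln (1 / lam)) + \<epsilon> * ((real d)^2 / (lam - \<epsilon>)) + (- \<tau> * ln \<tau> - (1 - \<tau>) * ln (1 - \<tau>)))
          = \<tau> * (- ln (1 - \<tau>) + ln (real d) - ln (real d - 1)) - \<tau> * (2 * (real d - 1) * ln (1 / lam))"
        by (simp add: algebra_simps)
      show ?thesis unfolding Hb using id key2 by linarith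
    qed
    also have "\<dots> = \<epsilon> * (ln (real d - 1) / 2 + real d * ln (1 / lam) + (real d)\<^sup>2 / (lam - \<epsilon>)) + bin_entropy (\<epsilon> / 2)"
      unfolding \<tau>_def by (simp add: algebra_simps)
    finally show ?thesis .
  qed
qed

lemma hm_neg_diff: assumes A: "(A :: complex mat) \<in> carrier_mat n n" and B: "B \<in> carrier_mat n n"
  and W: "W \<in> carrier_mat n n" and diff: "A - B = hm n W \<delta>"
  shows "B - A = hm n W (\<lambda>k. - \<delta> k)"
proof (rule eq_matI)
  fix i j assume "i < dim_row (hm n W (\<lambda>k. - \<delta> k))" "j < dim_col (hm n W (\<lambda>k. - \<delta> k))"
  hence i: "i < n" and j: "j < n" using W by simp_all
  have "(A - B) $$ (i,j) = hm n W \<delta> $$ (i,j)" using diff by simp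
  hence e1: "A $$ (i,j) - B $$ (i,j) = (\<Sum>k<n. W $$ (i,k) * \<delta> k * cnj (W $$ (j,k)))"
    using i j A B unfolding hm_index[OF W i j] by simp
  have e2: "hm n W (\<lambda>k. - \<delta> k) $$ (i,j) = - (\<Sum>k<n. W $$ (i,k) * \<delta> k * cnj (W $$ (j,k)))"
    unfolding hm_index[OF W i j] by (simp add: sum_negf[symmetric])
  have e3: "(B - A) $$ (i,j) = B $$ (i,j) - A $$ (i,j)" using i j A B by simp
  show "(B - A) $$ (i,j) = hm n W (\<lambda>k. - \<delta> k) $$ (i,j)" unfolding e3 e2 e1[symmetric] by simp
qed (use A B W in simp_all)

lemma zero_from_sum: assumes "(\<Sum>k<n. \<bar>f k\<bar>) \<le> (0::real)" and k: "k < (n::nat)" shows "f k = 0"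
proof -
  have "\<bar>f k\<bar> \<le> (\<Sum>k<n. \<bar>f k\<bar>)" using member_le_sum[of k "{..<n}" "\<lambda>k. \<bar>f k\<bar>"] k by simp
  thus ?thesis using assms(1) by simp
qed

lemma eq_from_diff: assumes A: "(A :: complex mat) \<in> carrier_mat n n" and B: "B \<in> carrier_mat n n"
  and W: "W \<in> carrier_mat n n" and diff: "A - B = hm n W \<delta>" and z: "\<And>k. k < n \<Longrightarrow> \<delta> k = 0"
  shows "A = B"
proof (rule eq_matI)
  fix i j assume "i < dim_row B" "j < dim_col B"
  hence i: "i < n" and j: "j < n" using B by simp_all
  have "(A - B) $$ (i,j) = hm n W \<delta> $$ (i,j)" using diff by simp
  also have "\<dots> = 0" unfolding hm_index[OF W i j] using z by simp
  finally show "A $$ (i,j) = B $$ (i,j)" using i j A B by simp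
qed (use A B in simp_all)

lemma rel_entropy_hm: assumes U: "unitary_mat n U" and Us: "unitary_mat n Us"
  shows "rel_entropy n (hm n U p) (hm n Us s) =
    Re (mtrace (hm n U p * hm n U (\<lambda>i. ln (p i)))) - Re (mtrace (hm n U p * hm n Us (\<lambda>i. ln (s i))))"
proof -
  have CU: "U \<in> carrier_mat n n" and CUs: "Us \<in> carrier_mat n n" using U Us by auto
  have "hm n U p * (hm n U (\<lambda>i. ln (p i)) - hm n Us (\<lambda>i. ln (s i))) =
        hm n U p * hm n U (\<lambda>i. ln (p i)) - hm n U p * hm n Us (\<lambda>i. ln (s i))"
    by (rule mult_minus_distrib_mat[OF hm_carrier[OF CU] hm_carrier[OF CU] hm_carrier[OF CUs]])
  moreover have "mtrace (hm n U p * hm n U (\<lambda>i. ln (p i)) - hm n U p * hm n Us (\<lambda>i. ln (s i))) =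
        mtrace (hm n U p * hm n U (\<lambda>i. ln (p i))) - mtrace (hm n U p * hm n Us (\<lambda>i. ln (s i)))"
    by (rule mtrace_minus[of _ n], insert CU CUs, simp_all)
  ultimately show ?thesis unfolding rel_entropy_def matfun_hm[OF U] matfun_hm[OF Us] by simp
qed

theorem lemma24:
  fixes d :: nat and \<rho> \<rho>' \<sigma> \<sigma>' :: "complex mat" and \<epsilon> :: real
  assumes "density_op d \<rho>" and "density_op d \<rho>'"
    and "density_op d \<sigma>" and "density_op d \<sigma>'"
    and "supp_op d \<rho> \<subseteq> supp_op d \<sigma>" and "supp_op d \<rho>' \<subseteq> supp_op d \<sigma>'"
    and "trace_norm d (\<rho> - \<rho>') \<le> \<epsilon>" and "trace_norm d (\<sigma> - \<sigma>') \<le> \<epsilon>"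
    and "lambda_min \<sigma> > \<epsilon>"
  shows "\<bar>rel_entropy d \<rho> \<sigma> - rel_entropy d \<rho>' \<sigma>'\<bar> \<le>
     \<epsilon> * (ln (real d - 1) / 2 + real d * ln (1 / lambda_min \<sigma>)
          + (real d)\<^sup>2 / (lambda_min \<sigma> - \<epsilon>))
     + bin_entropy (\<epsilon> / 2)"
proof -
  obtain U p where U: "unitary_mat d U" and rho: "\<rho> = hm d U p" and p0: "\<forall>i<d. p i \<ge> 0" and p1: "(\<Sum>i<d. p i) = 1"
    using density_decomp[OF assms(1)] by blast
  obtain V q where V: "unitary_mat d V" and rho': "\<rho>' = hm d V q" and q0: "\<forall>i<d. q i \<ge> 0" and q1: "(\<Sum>i<d. q i) = 1"
    using density_decomp[OF assms(2)] by blast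
  obtain Us s where Us: "unitary_mat d Us" and sig: "\<sigma> = hm d Us s" and s0: "\<forall>i<d. s i \<ge> 0" and s1: "(\<Sum>i<d. s i) = 1"
    using density_decomp[OF assms(3)] by blast
  obtain Vs t where Vs: "unitary_mat d Vs" and sig': "\<sigma>' = hm d Vs t" and t0: "\<forall>i<d. t i \<ge> 0" and t1: "(\<Sum>i<d. t i) = 1"
    using density_decomp[OF assms(4)] by blast
  have CU: "U \<in> carrier_mat d d" and CV: "V \<in> carrier_mat d d" and CUs: "Us \<in> carrier_mat d d"
    and CVs: "Vs \<in> carrier_mat d d" using U V Us Vs by auto
  have dpos: "d > 0" using p1 by (cases d) auto
  have hr: "mat_adjoint (hm d U p) = hm d U p" "mat_adjoint (hm d V q) = hm d V q"
    "mat_adjoint (hm d Us s) = hm d Us s" "mat_adjoint (hm d Vs t) = hm d Vs t"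
    using hm_hermitian CU CV CUs CVs by blast+
  note hmr = hm_minus_herm[OF hm_carrier[OF CU] hr(1) hm_carrier[OF CV] hr(2)]
  note hms = hm_minus_herm[OF hm_carrier[OF CUs] hr(3) hm_carrier[OF CVs] hr(4)]
  obtain W \<delta> where W: "unitary_mat d W" and dW: "hm d U p - hm d V q = hm d W \<delta>"
    using spectral_thm[OF hmr] by blast
  obtain Ws \<gamma> where Ws: "unitary_mat d Ws" and gW: "hm d Us s - hm d Vs t = hm d Ws \<gamma>"
    using spectral_thm[OF hms] by blast
  have CW: "W \<in> carrier_mat d d" and CWs: "Ws \<in> carrier_mat d d" using W Ws by auto
  have dE: "(\<Sum>k<d. \<bar>\<delta> k\<bar>) \<le> \<epsilon>" using assms(7) unfolding rho rho' dW trace_norm_hm[OF W] .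
  have gE: "(\<Sum>k<d. \<bar>\<gamma> k\<bar>) \<le> \<epsilon>" using assms(8) unfolding sig sig' gW trace_norm_hm[OF Ws] .
  have eps0: "\<epsilon> \<ge> 0" using dE order_trans[OF sum_nonneg] by (metis abs_ge_zero)
  define lam where "lam = lambda_min \<sigma>"
  have lam_le: "lam \<le> s i" if "i < d" for i unfolding lam_def sig by (rule lambda_min_le[OF Us that])
  have el: "\<epsilon> < lam" using assms(9) unfolding lam_def .
  have s_le1: "s i \<le> 1" if i: "i < d" for i
  proof -
    have "s i \<le> (\<Sum>j<d. s j)" by (rule member_le_sum, insert i s0, auto)
    thus ?thesis using s1 by simp
  qed
  have dl: "real d * lam \<le> 1"
  proof -
    have "(\<Sum>i<d. lam) \<le> (\<Sum>i<d. s i)" by (rule sum_mono, simp add: lam_le)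
    thus ?thesis using s1 by simp
  qed
  have lam0: "lam > 0" using el eps0 by simp
  have lam1: "lam \<le> 1" using lam_le[OF dpos] s_le1[OF dpos] by simp
  show ?thesis
  proof (cases "\<epsilon> = 0")
    case True
    have "\<rho> = \<rho>'" unfolding rho rho'
      by (rule eq_from_diff[OF hm_carrier[OF CU] hm_carrier[OF CV] CW dW], rule zero_from_sum[where n = d], insert dE True, simp_all)
    moreover have "\<sigma> = \<sigma>'" unfolding sig sig'
      by (rule eq_from_diff[OF hm_carrier[OF CUs] hm_carrier[OF CVs] CWs gW], rule zero_from_sum[where n = d], insert gE True, simp_all)
    ultimately show ?thesis using True by (simp add: bin_entropy_def)
  next
    case False
    hence e: "\<epsilon> > 0" using eps0 by simp
    define m where "m = lam - \<epsilon>"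
    have m0: "m > 0" unfolding m_def using el by simp
    have tm: "t j \<ge> m" if j: "j < d" for j
      unfolding m_def by (rule weyl[OF Us Vs Ws gW gE lam_le j])
    have sm: "s j \<ge> m" if j: "j < d" for j using lam_le[OF j] e unfolding m_def by simp
    define Er where "Er = Re (mtrace (hm d U p * hm d U (\<lambda>i. ln (p i))))"
    define Er' where "Er' = Re (mtrace (hm d V q * hm d V (\<lambda>i. ln (q i))))"
    define Crs where "Crs = Re (mtrace (hm d U p * hm d Us (\<lambda>i. ln (s i))))"
    define Cr's where "Cr's = Re (mtrace (hm d V q * hm d Us (\<lambda>i. ln (s i))))"
    define Cr's' where "Cr's' = Re (mtrace (hm d V q * hm d Vs (\<lambda>i. ln (t i))))"
    have X: "rel_entropy d \<rho> \<sigma> - rel_entropy d \<rho>' \<sigma>' = (Er - Er') - (Crs - Cr's) - (Cr's - Cr's')"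
      unfolding rho rho' sig sig' rel_entropy_hm[OF U Us] rel_entropy_hm[OF V Vs] Er_def Er'_def Crs_def Cr's_def Cr's'_def
      by simp
    have C1eq: "Crs - Cr's = Re (mtrace (hm d W \<delta> * hm d Us (\<lambda>i. ln (s i))))"
    proof -
      have "mtrace ((hm d U p - hm d V q) * hm d Us (\<lambda>i. ln (s i))) =
            mtrace (hm d U p * hm d Us (\<lambda>i. ln (s i))) - mtrace (hm d V q * hm d Us (\<lambda>i. ln (s i)))"
        by (rule trace_minus_mult[OF hm_carrier[OF CU] hm_carrier[OF CV] hm_carrier[OF CUs]])
      thus ?thesis unfolding dW Crs_def Cr's_def by simp
    qed
    have C1: "\<bar>Crs - Cr's\<bar> \<le> \<epsilon> * ln (1 / lam)"
      unfolding C1eq by (rule cross1[OF W Us dE _ lam0 lam1], simp add: lam_le s_le1)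
    have C2: "\<bar>Cr's - Cr's'\<bar> \<le> (real d)^2 * (\<epsilon> / (lam - \<epsilon>))"
      unfolding Cr's_def Cr's'_def m_def[symmetric]
      by (rule cross2[OF V Us Vs Ws _ q1 gW gE m0 sm tm], insert q0, auto)
    have tau: "0 < \<epsilon> / 2" "\<epsilon> / 2 < 1" using e el lam1 by simp_all
    have E1: "Er \<ge> Er' + ln (1 - \<epsilon> / 2) - \<epsilon> / 2 * ln (real d / (\<epsilon> / 2))"
      unfolding Er_def Er'_def
      by (rule entropy_matrix[OF dpos U V W _ _ p1 q1 dW dE tau], insert p0 q0, auto)
    have dW': "hm d V q - hm d U p = hm d W (\<lambda>k. - \<delta> k)"
      by (rule hm_neg_diff[OF hm_carrier[OF CU] hm_carrier[OF CV] CW dW])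
    have dE': "(\<Sum>k<d. \<bar>- \<delta> k\<bar>) \<le> \<epsilon>" using dE by simp
    have E2: "Er' \<ge> Er + ln (1 - \<epsilon> / 2) - \<epsilon> / 2 * ln (real d / (\<epsilon> / 2))"
      unfolding Er_def Er'_def
      by (rule entropy_matrix[OF dpos V U W _ _ q1 p1 dW' dE' tau], insert p0 q0, auto)
    have Ed: "\<bar>Er - Er'\<bar> \<le> - ln (1 - \<epsilon>/2) + \<epsilon>/2 * ln (real d / (\<epsilon>/2))" using E1 E2 by linarith
    have Ed1: "Er - Er' = 0" if d1: "d = 1"
    proof -
      have "p 0 = 1" using p1 d1 by simp
      moreover have "q 0 = 1" using q1 d1 by simp
      ultimately show ?thesis unfolding Er_def Er'_def Re_trace_same[OF U] Re_trace_same[OF V] using d1 by simp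
    qed
    show ?thesis unfolding lam_def[symmetric]
      by (rule final_arith[OF _ e el dl X Ed Ed1 C1 C2], insert dpos, simp)
  qed
qed


end
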